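(* Let $\mathcal{G}$ be the graph on vertices $\{1,2,3,4,5,6\}$ with edges $\{1,2\},\{1,3\},\{2,3\},\{4,5\},\{4,6\},\{5,6\},\{1,4\},\{2,5\},\{3,6\}$, and let $|\mathcal{G}\rangle\in\mathcal{B}^6$ be the stabilizer state stabilized (with all signs $+1$) by the operators $\sigma^x_u\prod_{v:\{u,v\}\in E}\sigma^z_v$, $u=1,\dots,6$. Suppose $|\mathcal{G}\rangle$ is shared by four parties $A=\{1,4\}$, $B=\{3,6\}$, $C=\{2\}$, $D=\{5\}$. Then $|\mathcal{G}\rangle$ is irreducible: there is no decomposition in which $|\mathcal{G}\rangle$ is LCU-equivalent to $|\Psi'\rangle\otimes|\Psi''\rangle$ with $|\Psi'\rangle,|\Psi''\rangle$ four-party stabilizer states each consisting of at least one qubit (party $\alpha$ holding $k_\alpha$ qubits of $|\Psi'\rangle$ and $n_\alpha-k_\alpha$ of $|\Psi''\rangle$, $0\le k_\alpha\le n_\alpha$, $1\le\sum_\alpha k_\alpha\le 5$).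
   Context: $\sigma^x_u,\sigma^z_u$ denote the Pauli matrices acting on qubit $u$. The Clifford group $\mathcal{C}(k)$ is the set of unitaries $U$ on $k$ qubits mapping each tensor product of Pauli matrices and identities, under conjugation, to $\pm$ such a tensor product. A stabilizer state on $k$ qubits is a unit vector that is the unique (up to phase) common $\pm1$-eigenvector of an abelian group generated by $k$ independent commuting Pauli tensor products. Two multi-party stabilizer states are LCU-equivalent if one equals $\bigotimes_\alpha U_\alpha$ applied to the other (up to global phase), where $U_\alpha$ is a Clifford unitary acting on the qubits of party $\alpha$. *)

theory Defs
  imports Complex_Main
begin

text \<open>
A state on a finite set Q of qubits is a
function from computational basis labels to complex amplitudes, where the basis
label S (a subset of Q) is the basis vector with qubits in S equal to 1 and the
others equal to 0; amplitudes outside Pow Q are 0. An operator on Q is a matrix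
indexed by Pow Q x Pow Q (entries outside are 0).
\<close>

type_synonym state = "nat set \<Rightarrow> complex"
type_synonym op = "nat set \<Rightarrow> nat set \<Rightarrow> complex"

definition vec_on :: "nat set \<Rightarrow> state \<Rightarrow> bool" where
  "vec_on Q v \<longleftrightarrow> (\<forall>S. \<not> S \<subseteq> Q \<longrightarrow> v S = 0)"

definition mat_on :: "nat set \<Rightarrow> op \<Rightarrow> bool" where
  "mat_on Q M \<longleftrightarrow> (\<forall>S T. \<not> (S \<subseteq> Q \<and> T \<subseteq> Q) \<longrightarrow> M S T = 0)"

definition vnorm :: "nat set \<Rightarrow> state \<Rightarrow> real" where
  "vnorm Q v = sqrt (\<Sum>S\<in>Pow Q. (cmod (v S))^2)"

definition apply_op :: "nat set \<Rightarrow> op \<Rightarrow> state \<Rightarrow> state" where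
  "apply_op Q M v = (\<lambda>S. if S \<subseteq> Q then (\<Sum>T\<in>Pow Q. M S T * v T) else 0)"

definition mmul :: "nat set \<Rightarrow> op \<Rightarrow> op \<Rightarrow> op" where
  "mmul Q M N = (\<lambda>S T. \<Sum>R\<in>Pow Q. M S R * N R T)"

definition adj :: "op \<Rightarrow> op" where
  "adj M = (\<lambda>S T. cnj (M T S))"

definition idm :: "nat set \<Rightarrow> op" where
  "idm Q = (\<lambda>S T. if S \<subseteq> Q \<and> S = T then 1 else 0)"

definition unitary_on :: "nat set \<Rightarrow> op \<Rightarrow> bool" where
  "unitary_on Q U \<longleftrightarrow> mat_on Q U \<and> mmul Q U (adj U) = idm Q \<and> mmul Q (adj U) U = idm Q"

definition symd :: "nat set \<Rightarrow> nat set \<Rightarrow> nat set" where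
  "symd A B = (A - B) \<union> (B - A)"

text \<open>The Pauli tensor product on Q having an X-component on the qubits of a and a
Z-component on the qubits of b: qubits in a - b carry sigma^x, qubits in b - a carry
sigma^z, qubits in a \<inter> b carry sigma^y = i sigma^x sigma^z, others the identity.\<close>
definition pauli :: "nat set \<Rightarrow> nat set \<Rightarrow> nat set \<Rightarrow> op" where
  "pauli Q a b = (\<lambda>S T. if S \<subseteq> Q \<and> T \<subseteq> Q \<and> S = symd T a
       then \<i> ^ card (a \<inter> b) * (-1) ^ card (b \<inter> T) else 0)"

definition clifford :: "nat set \<Rightarrow> op \<Rightarrow> bool" where
  "clifford Q U \<longleftrightarrow> unitary_on Q U \<and>
     (\<forall>a b. a \<subseteq> Q \<longrightarrow> b \<subseteq> Q \<longrightarrow>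
        (\<exists>a' b' (s::complex). a' \<subseteq> Q \<and> b' \<subseteq> Q \<and> (s = 1 \<or> s = -1) \<and>
           mmul Q (mmul Q U (pauli Q a b)) (adj U) = (\<lambda>S T. s * pauli Q a' b' S T)))"

text \<open>GF(2)-sum (iterated symmetric difference) of the sets f i, i \<in> J.\<close>
definition parity_set :: "nat set \<Rightarrow> (nat \<Rightarrow> nat set) \<Rightarrow> nat set" where
  "parity_set J f = {u. odd (card {i\<in>J. u \<in> f i})}"

text \<open>Independence = independence of the generated group modulo phases, i.e. no nonempty
product of generators is proportional to the identity.\<close>
definition stabilizer_state :: "nat set \<Rightarrow> state \<Rightarrow> bool" where
  "stabilizer_state Q v \<longleftrightarrow> finite Q \<and> vec_on Q v \<and> vnorm Q v = 1 \<and>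
    (\<exists>(g :: nat \<Rightarrow> nat set \<times> nat set) (s :: nat \<Rightarrow> complex).
       (\<forall>i<card Q. fst (g i) \<subseteq> Q \<and> snd (g i) \<subseteq> Q \<and> (s i = 1 \<or> s i = -1)) \<and>
       (\<forall>i<card Q. \<forall>j<card Q.
          mmul Q (pauli Q (fst (g i)) (snd (g i))) (pauli Q (fst (g j)) (snd (g j)))
        = mmul Q (pauli Q (fst (g j)) (snd (g j))) (pauli Q (fst (g i)) (snd (g i)))) \<and>
       (\<forall>J. J \<subseteq> {..<card Q} \<longrightarrow> J \<noteq> {} \<longrightarrow>
          parity_set J (\<lambda>i. fst (g i)) \<noteq> {} \<or> parity_set J (\<lambda>i. snd (g i)) \<noteq> {}) \<and>
       (\<forall>i<card Q. apply_op Q (pauli Q (fst (g i)) (snd (g i))) v = (\<lambda>S. s i * v S)) \<and>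
       (\<forall>w. vec_on Q w \<longrightarrow>
          (\<forall>i<card Q. apply_op Q (pauli Q (fst (g i)) (snd (g i))) w = (\<lambda>S. s i * w S)) \<longrightarrow>
          (\<exists>c. w = (\<lambda>S. c * v S))))"

definition tensor_state :: "nat set \<Rightarrow> nat set \<Rightarrow> state \<Rightarrow> state \<Rightarrow> state" where
  "tensor_state Q1 Q2 v w = (\<lambda>S. if S \<subseteq> Q1 \<union> Q2 then v (S \<inter> Q1) * w (S \<inter> Q2) else 0)"

definition local_op :: "nat set \<Rightarrow> nat set list \<Rightarrow> (nat \<Rightarrow> op) \<Rightarrow> op" where
  "local_op Q P U = (\<lambda>S T. if S \<subseteq> Q \<and> T \<subseteq> Q
      then (\<Prod>i<length P. U i (S \<inter> P ! i) (T \<inter> P ! i)) else 0)"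

definition Q6 :: "nat set" where "Q6 = {1,2,3,4,5,6}"

definition E6 :: "nat set set" where
  "E6 = {{1,2},{1,3},{2,3},{4,5},{4,6},{5,6},{1,4},{2,5},{3,6}}"

definition nbrs6 :: "nat \<Rightarrow> nat set" where
  "nbrs6 u = {v. {u, v} \<in> E6}"

definition parties6 :: "nat set list" where
  "parties6 = [{1,4}, {3,6}, {2}, {5}]"

end

theory Submission
  imports Defs
begin

lemma sum_pow_split:
  fixes F :: "nat set \<Rightarrow> 'b::comm_monoid_add"
  assumes "finite A" "finite B" "A \<inter> B = {}"
  shows "(\<Sum>R\<in>Pow (A \<union> B). F R) = (\<Sum>R1\<in>Pow A. \<Sum>R2\<in>Pow B. F (R1 \<union> R2))"
proof -
  have bij: "bij_betw (\<lambda>(R1,R2). R1 \<union> R2) (Pow A \<times> Pow B) (Pow (A \<union> B))"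
  proof (rule bij_betw_byWitness[where f'="\<lambda>R. (R \<inter> A, R \<inter> B)"])
    show "\<forall>a\<in>Pow A \<times> Pow B. (\<lambda>R. (R \<inter> A, R \<inter> B)) ((\<lambda>(R1, R2). R1 \<union> R2) a) = a"
      using assms(3) by auto
    show "\<forall>a'\<in>Pow (A \<union> B). (\<lambda>(R1, R2). R1 \<union> R2) ((\<lambda>R. (R \<inter> A, R \<inter> B)) a') = a'"
      by auto
    show "(\<lambda>(R1, R2). R1 \<union> R2) ` (Pow A \<times> Pow B) \<subseteq> Pow (A \<union> B)" by auto
    show "(\<lambda>R. (R \<inter> A, R \<inter> B)) ` Pow (A \<union> B) \<subseteq> Pow A \<times> Pow B" by auto
  qed
  have "(\<Sum>R\<in>Pow (A \<union> B). F R) = (\<Sum>p\<in>Pow A \<times> Pow B. F ((\<lambda>(R1,R2). R1 \<union> R2) p))"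
    using sum.reindex_bij_betw[OF bij, of F] by simp
  also have "\<dots> = (\<Sum>(R1,R2)\<in>Pow A \<times> Pow B. F (R1 \<union> R2))"
    by (rule sum.cong) auto
  also have "\<dots> = (\<Sum>R1\<in>Pow A. \<Sum>R2\<in>Pow B. F (R1 \<union> R2))"
    by (simp add: sum.cartesian_product)
  finally show ?thesis .
qed

definition sg :: "nat set \<Rightarrow> nat set \<Rightarrow> complex" where
  "sg b Z = (-1) ^ card (b \<inter> Z)"

lemma card_symd_parity:
  assumes "finite A" "finite B"
  shows "((-1::complex) ^ card (symd A B)) = (-1) ^ card A * (-1) ^ card B"
proof -
  have d: "symd A B = (A - B) \<union> (B - A)" by (simp add: symd_def)
  have c1: "card (symd A B) = card (A - B) + card (B - A)"
    unfolding d using assms by (subst card_Un_disjoint) auto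
  have c2: "card A = card (A - B) + card (A \<inter> B)"
    using assms by (metis Diff_Diff_Int Int_commute card_Diff_subset_Int card_mono inf_le1 le_add_diff_inverse2 finite_Int card_Diff_subset Diff_subset)
  have c3: "card B = card (B - A) + card (A \<inter> B)"
    using assms by (metis Int_commute Diff_Diff_Int card_Diff_subset_Int card_mono inf_le1 le_add_diff_inverse2 finite_Int)
  have sq: "((-1::complex) ^ card (A \<inter> B))^2 = 1"
    by (metis power_minus1_even power_mult mult.commute)
  have "(-1::complex) ^ card A * (-1) ^ card B = (-1) ^ (card (A - B) + card (B - A)) * ((-1) ^ card (A \<inter> B))^2"
    by (simp add: c2 c3 power_add power2_eq_square)
  also have "\<dots> = (-1) ^ card (symd A B)" by (simp only: c1 sq) simp
  finally show ?thesis by simp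
qed

lemma Int_symd: "b \<inter> symd A B = symd (b \<inter> A) (b \<inter> B)"
  by (auto simp: symd_def)

lemma sg_symd_right: "finite b \<Longrightarrow> sg b (symd A B) = sg b A * sg b B"
  unfolding sg_def Int_symd by (rule card_symd_parity) auto

lemma sg_symd_left: "finite b \<Longrightarrow> finite b' \<Longrightarrow> sg (symd b b') Z = sg b Z * sg b' Z"
proof -
  assume "finite b" "finite b'"
  have "symd b b' \<inter> Z = symd (b \<inter> Z) (b' \<inter> Z)" by (auto simp: symd_def)
  then show ?thesis unfolding sg_def using \<open>finite b\<close> \<open>finite b'\<close>
    by (simp add: card_symd_parity)
qed

lemma sg_sq: "sg b Z * sg b Z = 1"
  by (simp add: sg_def power_mult_distrib[symmetric] flip: power_add mult_2)

lemma sg_cnj: "cnj (sg b Z) = sg b Z"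
  by (simp add: sg_def)

lemma sg_nz: "sg b Z \<noteq> 0"
  by (simp add: sg_def)

lemma sg_union_disj: "finite b \<Longrightarrow> S \<inter> R = {} \<Longrightarrow> sg b (S \<union> R) = sg b S * sg b R"
proof -
  assume "finite b" "S \<inter> R = {}"
  then have "symd S R = S \<union> R" by (auto simp: symd_def)
  then show ?thesis using sg_symd_right[OF \<open>finite b\<close>, of S R] by simp
qed

lemma sg_empty: "sg b {} = 1" "sg {} Z = 1" by (simp_all add: sg_def)

lemma symd_assoc: "symd (symd A B) C = symd A (symd B C)" by (auto simp: symd_def)
lemma symd_self: "symd A A = {}" by (auto simp: symd_def)
lemma symd_empty: "symd A {} = A" "symd {} A = A" by (auto simp: symd_def)
lemma symd_comm: "symd A B = symd B A" by (auto simp: symd_def)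
lemma symd_symd_cancel: "symd (symd S a) a = S" by (auto simp: symd_def)
lemma symd_sub: "A \<subseteq> Q \<Longrightarrow> B \<subseteq> Q \<Longrightarrow> symd A B \<subseteq> Q" by (auto simp: symd_def)

lemma apply_pauli:
  assumes "finite Q" "a \<subseteq> Q" "S \<subseteq> Q"
  shows "apply_op Q (pauli Q a b) v S = \<i> ^ card (a \<inter> b) * sg b (symd S a) * v (symd S a)"
proof -
  have "apply_op Q (pauli Q a b) v S = (\<Sum>T\<in>Pow Q. pauli Q a b S T * v T)"
    using assms by (simp add: apply_op_def)
  also have "\<dots> = (\<Sum>T\<in>Pow Q. if T = symd S a then \<i> ^ card (a \<inter> b) * sg b T * v T else 0)"
  proof (rule sum.cong[OF refl])
    fix T assume T: "T \<in> Pow Q"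
    have "(S = symd T a) = (T = symd S a)" by (auto simp: symd_def)
    then show "pauli Q a b S T * v T = (if T = symd S a then \<i> ^ card (a \<inter> b) * sg b T * v T else 0)"
      using T assms by (auto simp: pauli_def sg_def Int_commute)
  qed
  also have "\<dots> = \<i> ^ card (a \<inter> b) * sg b (symd S a) * v (symd S a)"
    using assms by (simp add: sum.delta' symd_sub)
  finally show ?thesis .
qed

definition eig :: "nat set \<Rightarrow> state \<Rightarrow> nat set \<Rightarrow> nat set \<Rightarrow> bool" where
  "eig Q v a b \<longleftrightarrow> a \<subseteq> Q \<and> b \<subseteq> Q \<and>
     (\<exists>s. s \<noteq> 0 \<and> (\<forall>S. S \<subseteq> Q \<longrightarrow> sg b (symd S a) * v (symd S a) = s * v S))"

definition mm :: "nat set \<Rightarrow> nat set \<Rightarrow> state \<Rightarrow> bool" where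
  "mm Q X v \<longleftrightarrow> (\<exists>\<kappa>. \<kappa> \<noteq> 0 \<and> (\<forall>S\<in>Pow X. \<forall>T\<in>Pow X.
      (\<Sum>R\<in>Pow (Q - X). v (S \<union> R) * cnj (v (T \<union> R))) = (if S = T then \<kappa> else 0)))"

lemma eig_from_apply:
  assumes "finite Q" "a \<subseteq> Q" "b \<subseteq> Q" "apply_op Q (pauli Q a b) v = (\<lambda>S. s * v S)" "s \<noteq> 0"
  shows "eig Q v a b"
proof -
  have "\<forall>S. S \<subseteq> Q \<longrightarrow> sg b (symd S a) * v (symd S a) = (s / \<i> ^ card (a \<inter> b)) * v S"
  proof (intro allI impI)
    fix S assume S: "S \<subseteq> Q"
    have "\<i> ^ card (a \<inter> b) * sg b (symd S a) * v (symd S a) = s * v S"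
      using apply_pauli[OF assms(1,2) S, of b v] assms(4) by (metis)
    then show "sg b (symd S a) * v (symd S a) = (s / \<i> ^ card (a \<inter> b)) * v S"
      by (simp add: field_simps)
  qed
  moreover have "s / \<i> ^ card (a \<inter> b) \<noteq> 0" using assms(5) by simp
  ultimately show ?thesis using assms unfolding eig_def by blast
qed

lemma eig_empty: "eig Q v {} {}"
  unfolding eig_def by (rule conjI, simp, rule conjI, simp, rule exI[of _ 1]) (simp add: symd_empty sg_empty)

lemma eig_symd_val:
  assumes "finite Q" "a \<subseteq> Q" "b \<subseteq> Q" "a' \<subseteq> Q" "b' \<subseteq> Q"
    and e1: "\<forall>S. S \<subseteq> Q \<longrightarrow> sg b (symd S a) * v (symd S a) = s * v S"
    and e2: "\<forall>S. S \<subseteq> Q \<longrightarrow> sg b' (symd S a') * v (symd S a') = s' * v S"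
    and S: "S \<subseteq> Q"
  shows "sg (symd b b') (symd S (symd a a')) * v (symd S (symd a a')) = sg b a' * s * s' * v S"
proof -
  have fb: "finite b" "finite b'" using assms finite_subset by blast+
  define Z where "Z = symd S a"
  have Z: "Z \<subseteq> Q" using S assms(2) by (simp add: Z_def symd_sub)
  have eq: "symd S (symd a a') = symd Z a'" by (simp add: Z_def symd_assoc)
  have "sg (symd b b') (symd Z a') * v (symd Z a') = sg b (symd Z a') * (sg b' (symd Z a') * v (symd Z a'))"
    by (simp add: sg_symd_left fb)
  also have "\<dots> = sg b Z * sg b a' * (s' * v Z)" using e2 Z by (simp add: sg_symd_right fb)
  also have "\<dots> = sg b a' * s' * (sg b Z * v Z)" by (simp only: mult_ac)
  also have "\<dots> = sg b a' * s' * (s * v S)" using e1 S by (simp add: Z_def)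
  finally show ?thesis by (simp add: eq mult_ac)
qed

lemma eig_symd:
  assumes "finite Q" "eig Q v a b" "eig Q v a' b'"
  shows "eig Q v (symd a a') (symd b b')"
proof -
  obtain s where s: "s \<noteq> 0" "\<forall>S. S \<subseteq> Q \<longrightarrow> sg b (symd S a) * v (symd S a) = s * v S"
    and ab: "a \<subseteq> Q" "b \<subseteq> Q" using assms(2) unfolding eig_def by blast
  obtain s' where s': "s' \<noteq> 0" "\<forall>S. S \<subseteq> Q \<longrightarrow> sg b' (symd S a') * v (symd S a') = s' * v S"
    and ab': "a' \<subseteq> Q" "b' \<subseteq> Q" using assms(3) unfolding eig_def by blast
  have "\<forall>S. S \<subseteq> Q \<longrightarrow> sg (symd b b') (symd S (symd a a')) * v (symd S (symd a a')) = (sg b a' * s * s') * v S"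
    using eig_symd_val[OF assms(1) ab ab' s(2) s'(2)] by simp
  moreover have "sg b a' * s * s' \<noteq> 0" using s s' sg_nz by simp
  moreover have "symd a a' \<subseteq> Q" "symd b b' \<subseteq> Q" using ab ab' by (simp_all add: symd_sub)
  ultimately show ?thesis unfolding eig_def by blast
qed

lemma eig_comm:
  assumes "finite Q" "eig Q v a b" "eig Q v a' b'" "S0 \<subseteq> Q" "v S0 \<noteq> 0"
  shows "sg b a' = sg b' a"
proof -
  obtain s where s: "s \<noteq> 0" "\<forall>S. S \<subseteq> Q \<longrightarrow> sg b (symd S a) * v (symd S a) = s * v S"
    and ab: "a \<subseteq> Q" "b \<subseteq> Q" using assms(2) unfolding eig_def by blast
  obtain s' where s': "s' \<noteq> 0" "\<forall>S. S \<subseteq> Q \<longrightarrow> sg b' (symd S a') * v (symd S a') = s' * v S"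
    and ab': "a' \<subseteq> Q" "b' \<subseteq> Q" using assms(3) unfolding eig_def by blast
  have 1: "sg (symd b b') (symd S0 (symd a a')) * v (symd S0 (symd a a')) = sg b a' * s * s' * v S0"
    using eig_symd_val[OF assms(1) ab ab' s(2) s'(2) assms(4)] .
  have 2: "sg (symd b' b) (symd S0 (symd a' a)) * v (symd S0 (symd a' a)) = sg b' a * s' * s * v S0"
    using eig_symd_val[OF assms(1) ab' ab s'(2) s(2) assms(4)] .
  have "sg b a' * s * s' * v S0 = sg b' a * s * s' * v S0"
    using 1 2 by (simp add: symd_comm mult_ac)
  then show ?thesis using s s' assms(5) by simp
qed

lemma sum_sg_zero:
  assumes "finite X" "b \<subseteq> X" "b \<noteq> {}"
  shows "(\<Sum>S\<in>Pow X. sg b S) = 0"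
proof -
  obtain x where x: "x \<in> b" using assms(3) by blast
  have fb: "finite b" using assms finite_subset by blast
  have X: "X = {x} \<union> (X - {x})" using x assms(2) by blast
  have "(\<Sum>S\<in>Pow X. sg b S) = (\<Sum>R1\<in>Pow {x}. \<Sum>R2\<in>Pow (X - {x}). sg b (R1 \<union> R2))"
    by (subst X, rule sum_pow_split) (use assms in auto)
  also have "\<dots> = (\<Sum>R2\<in>Pow (X - {x}). sg b R2) + (\<Sum>R2\<in>Pow (X - {x}). sg b ({x} \<union> R2))"
    by (simp add: Pow_insert)
  also have "(\<Sum>R2\<in>Pow (X - {x}). sg b ({x} \<union> R2)) = (\<Sum>R2\<in>Pow (X - {x}). - sg b R2)"
  proof (rule sum.cong[OF refl])
    fix R2 assume "R2 \<in> Pow (X - {x})"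
    then have "{x} \<inter> R2 = {}" by auto
    then have "sg b ({x} \<union> R2) = sg b {x} * sg b R2" using sg_union_disj[OF fb, of "{x}" R2] by blast
    moreover have "sg b {x} = -1" using x by (simp add: sg_def)
    ultimately show "sg b ({x} \<union> R2) = - sg b R2" by simp
  qed
  finally show ?thesis by (simp add: sum_negf)
qed

lemma mm_eig_false:
  assumes Q: "finite Q" and XQ: "X \<subseteq> Q" and mm: "mm Q X v" and e: "eig Q v a b"
    and aX: "a \<subseteq> X" and bX: "b \<subseteq> X"
    and nz: "(\<Sum>S\<in>Pow Q. cnj (v S) * v S) \<noteq> 0" and ne: "a \<noteq> {} \<or> b \<noteq> {}"
  shows False
proof -
  obtain \<kappa> where k: "\<kappa> \<noteq> 0" "\<forall>S\<in>Pow X. \<forall>T\<in>Pow X.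
      (\<Sum>R\<in>Pow (Q - X). v (S \<union> R) * cnj (v (T \<union> R))) = (if S = T then \<kappa> else 0)"
    using mm unfolding mm_def by blast
  obtain s where s: "s \<noteq> 0" "\<forall>S. S \<subseteq> Q \<longrightarrow> sg b (symd S a) * v (symd S a) = s * v S"
    using e unfolding eig_def by blast
  have fX1: "finite X" using Q XQ by (rule finite_subset[rotated])
  have fX: "finite X" "finite (Q - X)" "finite b" using Q fX1 bX by (auto intro: finite_subset)
  have QXY: "Q = X \<union> (Q - X)" using XQ by blast
  define F where "F S = cnj (v S) * (sg b (symd S a) * v (symd S a))" for S
  have "(\<Sum>S\<in>Pow Q. F S) = (\<Sum>S\<in>Pow Q. s * (cnj (v S) * v S))"
  proof (rule sum.cong[OF refl])
    fix S assume "S \<in> Pow Q"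
    then have SQ: "S \<subseteq> Q" by simp
    show "F S = s * (cnj (v S) * v S)"
      unfolding F_def s(2)[rule_format, OF SQ] by (simp only: mult_ac)
  qed
  also have "\<dots> = s * (\<Sum>S\<in>Pow Q. cnj (v S) * v S)" by (rule sum_distrib_left[symmetric])
  also have "\<dots> \<noteq> 0" using s nz by simp
  finally have A: "(\<Sum>S\<in>Pow Q. F S) \<noteq> 0" .
  have "(\<Sum>S\<in>Pow Q. F S) = (\<Sum>S1\<in>Pow X. \<Sum>R\<in>Pow (Q - X). F (S1 \<union> R))"
    by (subst QXY, rule sum_pow_split) (use fX in auto)
  also have "\<dots> = (\<Sum>S1\<in>Pow X. sg b (symd S1 a) * (if symd S1 a = S1 then \<kappa> else 0))"
  proof (rule sum.cong[OF refl])
    fix S1 assume S1: "S1 \<in> Pow X"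
    have "(\<Sum>R\<in>Pow (Q - X). F (S1 \<union> R)) =
        (\<Sum>R\<in>Pow (Q - X). sg b (symd S1 a) * (v (symd S1 a \<union> R) * cnj (v (S1 \<union> R))))"
    proof (rule sum.cong[OF refl])
      fix R assume R: "R \<in> Pow (Q - X)"
      have 1: "symd (S1 \<union> R) a = symd S1 a \<union> R" using R aX by (auto simp: symd_def)
      have 2: "b \<inter> (symd S1 a \<union> R) = b \<inter> symd S1 a" using R bX by auto
      show "F (S1 \<union> R) = sg b (symd S1 a) * (v (symd S1 a \<union> R) * cnj (v (S1 \<union> R)))"
        unfolding F_def 1 by (simp add: sg_def 2)
    qed
    also have "\<dots> = sg b (symd S1 a) * (\<Sum>R\<in>Pow (Q - X). v (symd S1 a \<union> R) * cnj (v (S1 \<union> R)))"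
      by (rule sum_distrib_left[symmetric])
    also have "(\<Sum>R\<in>Pow (Q - X). v (symd S1 a \<union> R) * cnj (v (S1 \<union> R))) = (if symd S1 a = S1 then \<kappa> else 0)"
    proof -
      have "symd S1 a \<in> Pow X" using S1 aX by (simp add: symd_sub)
      then show ?thesis using k(2)[rule_format, OF _ S1] by blast
    qed
    finally show "(\<Sum>R\<in>Pow (Q - X). F (S1 \<union> R)) = sg b (symd S1 a) * (if symd S1 a = S1 then \<kappa> else 0)" .
  qed
  also have "\<dots> = 0"
  proof (cases "a = {}")
    case True
    then have b: "b \<noteq> {}" using ne by simp
    have "(\<Sum>S1\<in>Pow X. sg b (symd S1 a) * (if symd S1 a = S1 then \<kappa> else 0)) = \<kappa> * (\<Sum>S1\<in>Pow X. sg b S1)"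
      using True by (simp add: symd_empty sum_distrib_left mult.commute)
    also have "\<dots> = 0" using sum_sg_zero[OF fX(1) bX b] by simp
    finally show ?thesis .
  next
    case False
    have "symd S1 a \<noteq> S1" for S1 using False by (auto simp: symd_def)
    then show ?thesis by simp
  qed
  finally show False using A by simp
qed

lemma even_symd_card:
  assumes "finite A" "finite B"
  shows "even (card (symd A B)) \<longleftrightarrow> (even (card A) \<longleftrightarrow> even (card B))"
  using card_symd_parity[OF assms]
  by (cases "even (card A)"; cases "even (card B)"; cases "even (card (symd A B))") (simp_all add: minus_one_power_iff)

lemma parity_set_symd:
  assumes "finite J" "finite J'"
  shows "parity_set (symd J J') f = symd (parity_set J f) (parity_set J' f)"
proof -
  have "{i \<in> symd J J'. u \<in> f i} = symd {i\<in>J. u \<in> f i} {i\<in>J'. u \<in> f i}" for u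
    by (auto simp: symd_def)
  then show ?thesis unfolding parity_set_def
    using even_symd_card[of "{i\<in>J. _ \<in> f i}" "{i\<in>J'. _ \<in> f i}"] assms
    by (auto simp: symd_def)
qed

lemma parity_set_empty: "parity_set {} f = {}"
  by (simp add: parity_set_def)

lemma parity_set_single: "parity_set {j} f = f j"
proof -
  have "{i \<in> {j}. u \<in> f i} = (if u \<in> f j then {j} else {})" for u by auto
  then show ?thesis unfolding parity_set_def by auto
qed

lemma parity_set_insert:
  assumes "finite J" "j \<notin> J"
  shows "parity_set (insert j J) f = symd (parity_set J f) (f j)"
proof -
  have "insert j J = symd J {j}" using assms(2) by (auto simp: symd_def)
  then show ?thesis using parity_set_symd[OF assms(1), of "{j}" f] by (simp add: parity_set_single)
qed

lemma parity_set_sub: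
  assumes "\<forall>i\<in>J. f i \<subseteq> Q"
  shows "parity_set J f \<subseteq> Q"
proof
  fix u assume "u \<in> parity_set J f"
  then have "{i \<in> J. u \<in> f i} \<noteq> {}" unfolding parity_set_def by (intro notI) simp
  then show "u \<in> Q" using assms by auto
qed

definition stabdata :: "nat set \<Rightarrow> state \<Rightarrow> (nat \<Rightarrow> nat set \<times> nat set) \<Rightarrow> bool" where
  "stabdata Q v g \<longleftrightarrow>
     (\<forall>i<card Q. eig Q v (fst (g i)) (snd (g i))) \<and>
     (\<forall>J. J \<subseteq> {..<card Q} \<longrightarrow> J \<noteq> {} \<longrightarrow>
          parity_set J (\<lambda>i. fst (g i)) \<noteq> {} \<or> parity_set J (\<lambda>i. snd (g i)) \<noteq> {})"

lemma stab_basic: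
  assumes "stabilizer_state Q v"
  shows "finite Q" "vec_on Q v" "vnorm Q v = 1"
  using assms unfolding stabilizer_state_def
  by (rule conjunct1, rule conjunct1[OF conjunct2], rule conjunct1[OF conjunct2[OF conjunct2]])

lemma stab_norm:
  assumes "stabilizer_state Q v"
  shows "(\<Sum>S\<in>Pow Q. cnj (v S) * v S) = 1"
proof -
  have "vnorm Q v = 1" using stab_basic[OF assms] by simp
  then have r: "(\<Sum>S\<in>Pow Q. (cmod (v S))^2) = 1" unfolding vnorm_def
    by (metis real_sqrt_eq_1_iff)
  have "(\<Sum>S\<in>Pow Q. cnj (v S) * v S) = (\<Sum>S\<in>Pow Q. complex_of_real ((cmod (v S))^2))"
    by (rule sum.cong[OF refl]) (metis complex_norm_square mult.commute)
  also have "\<dots> = complex_of_real (\<Sum>S\<in>Pow Q. (cmod (v S))^2)" by simp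
  finally show ?thesis using r by simp
qed

lemma stab_nz:
  assumes "stabilizer_state Q v"
  obtains S0 where "S0 \<subseteq> Q" "v S0 \<noteq> 0"
proof -
  have "(\<Sum>S\<in>Pow Q. cnj (v S) * v S) \<noteq> 0" using stab_norm[OF assms] by simp
  then obtain S0 where "S0 \<in> Pow Q" "cnj (v S0) * v S0 \<noteq> 0" by (metis (no_types, lifting) sum.neutral)
  then show ?thesis using that by auto
qed

lemma stab_data:
  assumes "stabilizer_state Q v"
  obtains g where "stabdata Q v g"
proof -
  have fQ: "finite Q" using stab_basic[OF assms] by simp
  obtain g :: "nat \<Rightarrow> nat set \<times> nat set" and s :: "nat \<Rightarrow> complex" where
    g1: "\<forall>i<card Q. fst (g i) \<subseteq> Q \<and> snd (g i) \<subseteq> Q \<and> (s i = 1 \<or> s i = -1)" and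
    g3: "\<forall>J. J \<subseteq> {..<card Q} \<longrightarrow> J \<noteq> {} \<longrightarrow>
          parity_set J (\<lambda>i. fst (g i)) \<noteq> {} \<or> parity_set J (\<lambda>i. snd (g i)) \<noteq> {}" and
    g4: "\<forall>i<card Q. apply_op Q (pauli Q (fst (g i)) (snd (g i))) v = (\<lambda>S. s i * v S)"
    using assms unfolding stabilizer_state_def by (elim conjE exE) blast
  have "\<forall>i<card Q. eig Q v (fst (g i)) (snd (g i))"
  proof (intro allI impI)
    fix i assume i: "i < card Q"
    have "s i \<noteq> 0" using g1 i by auto
    then show "eig Q v (fst (g i)) (snd (g i))"
      using eig_from_apply[OF fQ _ _ g4[rule_format, OF i]] g1 i by blast
  qed
  then show ?thesis using that g3 unfolding stabdata_def by blast
qed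

definition gx :: "(nat \<Rightarrow> nat set \<times> nat set) \<Rightarrow> nat set \<Rightarrow> nat set" where
  "gx g J = parity_set J (\<lambda>i. fst (g i))"
definition gz :: "(nat \<Rightarrow> nat set \<times> nat set) \<Rightarrow> nat set \<Rightarrow> nat set" where
  "gz g J = parity_set J (\<lambda>i. snd (g i))"

lemma gen_eig:
  assumes fQ: "finite Q" and sd: "stabdata Q v g" and J: "J \<subseteq> {..<card Q}"
  shows "eig Q v (gx g J) (gz g J)"
proof -
  have fJ: "finite J" using J finite_subset by blast
  from fJ J show ?thesis
  proof (induction J rule: finite_subset_induct)
    case empty
    then show ?case by (simp add: gx_def gz_def parity_set_empty eig_empty)
  next
    case (insert j J)
    have e: "eig Q v (fst (g j)) (snd (g j))" using sd insert(2) unfolding stabdata_def by auto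
    show ?case unfolding gx_def gz_def parity_set_insert[OF insert(1,3)]
      using eig_symd[OF fQ insert(4)[unfolded gx_def gz_def] e] .
  qed
qed

lemma gen_inj:
  assumes fQ: "finite Q" and sd: "stabdata Q v g" and J: "J \<subseteq> {..<card Q}" and J': "J' \<subseteq> {..<card Q}"
    and ex: "gx g J = gx g J'" and ez: "gz g J = gz g J'"
  shows "J = J'"
proof (rule ccontr)
  assume ne: "J \<noteq> J'"
  have f: "finite J" "finite J'" using J J' finite_subset by blast+
  have "symd J J' \<subseteq> {..<card Q}" using J J' by (rule symd_sub)
  moreover have "symd J J' \<noteq> {}" using ne by (auto simp: symd_def)
  ultimately have "parity_set (symd J J') (\<lambda>i. fst (g i)) \<noteq> {} \<or> parity_set (symd J J') (\<lambda>i. snd (g i)) \<noteq> {}"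
    using sd unfolding stabdata_def by blast
  then show False using ex ez unfolding gx_def gz_def parity_set_symd[OF f] by (simp add: symd_self)
qed

lemma gen_sym:
  assumes "finite J" "finite J'"
  shows "gx g (symd J J') = symd (gx g J) (gx g J')" "gz g (symd J J') = symd (gz g J) (gz g J')"
  unfolding gx_def gz_def using parity_set_symd[OF assms] by auto

lemma restr_inj:
  assumes sv: "stabilizer_state Q v" and sd: "stabdata Q v g" and XQ: "X \<subseteq> Q" and mm: "mm Q X v"
  shows "inj_on (\<lambda>J. (gx g J \<inter> (Q - X), gz g J \<inter> (Q - X))) (Pow {..<card Q})"
proof (rule inj_onI)
  fix J J' assume J: "J \<in> Pow {..<card Q}" and J': "J' \<in> Pow {..<card Q}"
    and eq: "(gx g J \<inter> (Q - X), gz g J \<inter> (Q - X)) = (gx g J' \<inter> (Q - X), gz g J' \<inter> (Q - X))"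
  have fQ: "finite Q" using stab_basic[OF sv] by simp
  have f: "finite J" "finite J'" using J J' finite_subset by auto
  define D where "D = symd J J'"
  have D: "D \<subseteq> {..<card Q}" using J J' by (simp add: D_def symd_sub)
  have e: "eig Q v (gx g D) (gz g D)" using gen_eig[OF fQ sd D] .
  have sub: "gx g D \<subseteq> Q" "gz g D \<subseteq> Q" using e unfolding eig_def by auto
  have "gx g D \<inter> (Q - X) = {}" "gz g D \<inter> (Q - X) = {}"
    using eq unfolding D_def gen_sym[OF f] by (auto simp: symd_def)
  then have inX: "gx g D \<subseteq> X" "gz g D \<subseteq> X" using sub by auto
  have "gx g D = {} \<and> gz g D = {}"
  proof (rule ccontr)
    assume "\<not> (gx g D = {} \<and> gz g D = {})"
    then show False using mm_eig_false[OF fQ XQ mm e inX] stab_norm[OF sv] by auto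
  qed
  then have "gx g D = gx g {} \<and> gz g D = gz g {}" by (simp add: gx_def gz_def parity_set_empty)
  then have "D = {}" using gen_inj[OF fQ sd D] by auto
  then show "J = J'" by (auto simp: D_def symd_def)
qed

lemma stab_card:
  assumes sv: "stabilizer_state Q v" and XQ: "X \<subseteq> Q" and mm: "mm Q X v"
  shows "card X \<le> card (Q - X)"
proof -
  obtain g where sd: "stabdata Q v g" using stab_data[OF sv] by blast
  have fQ: "finite Q" using stab_basic[OF sv] by simp
  let ?h = "\<lambda>J. (gx g J \<inter> (Q - X), gz g J \<inter> (Q - X))"
  have inj: "inj_on ?h (Pow {..<card Q})" using restr_inj[OF sv sd XQ mm] .
  have "?h ` Pow {..<card Q} \<subseteq> Pow (Q - X) \<times> Pow (Q - X)" by auto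
  then have "card (?h ` Pow {..<card Q}) \<le> card (Pow (Q - X) \<times> Pow (Q - X))"
    using fQ by (intro card_mono) auto
  then have "(2::nat) ^ card Q \<le> 2 ^ card (Q - X) * 2 ^ card (Q - X)"
    using fQ by (simp add: card_image[OF inj] card_Pow card_cartesian_product)
  then have "(2::nat) ^ card Q \<le> 2 ^ (card (Q - X) + card (Q - X))" by (simp add: power_add)
  then have "card Q \<le> card (Q - X) + card (Q - X)" by simp
  moreover have "card Q = card X + card (Q - X)"
    using fQ XQ by (metis card_Diff_subset add.commute finite_subset le_add_diff_inverse2 card_mono)
  ultimately show ?thesis by simp
qed

lemma card_filter2:
  assumes "c \<noteq> d"
  shows "card {y\<in>{c,d}. P y} = of_bool (P c) + of_bool (P d)"
proof -
  have "{y\<in>{c,d}. P y} = (if P c then {c} else {}) \<union> (if P d then {d} else {})" by auto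
  then show ?thesis using assms by (cases "P c"; cases "P d") simp_all
qed

lemma comb_final:
  assumes dist: "a \<noteq> b" "a \<noteq> c" "a \<noteq> d" "b \<noteq> c" "b \<noteq> d" "c \<noteq> d"
    and sub: "x1 \<subseteq> {a,b,c,d}" "z1 \<subseteq> {a,b,c,d}" "x2 \<subseteq> {a,b,c,d}" "z2 \<subseteq> {a,b,c,d}"
    and r: "x1 \<inter> {a,b} = {a}" "z1 \<inter> {a,b} = {}" "x2 \<inter> {a,b} = {}" "z2 \<inter> {a,b} = {a}"
    and cov: "c \<in> x1 \<union> z1" "d \<in> x1 \<union> z1" "c \<in> x2 \<union> z2" "d \<in> x2 \<union> z2"
      "c \<in> symd x1 x2 \<union> symd z1 z2" "d \<in> symd x1 x2 \<union> symd z1 z2"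
    and com: "sg z1 x2 = sg z2 x1"
  shows False
proof -
  have m1: "a \<notin> z1" "b \<notin> z1" using r(2) by auto
  have m2: "a \<notin> x2" "b \<notin> x2" using r(3) by auto
  have m3: "a \<in> x1" "b \<notin> x1" using r(1) dist(1) by auto
  have m4: "a \<in> z2" "b \<notin> z2" using r(4) dist(1) by auto
  note m = m1 m2 m3 m4
  have e1: "z1 \<inter> x2 = {y\<in>{c,d}. y \<in> z1 \<and> y \<in> x2}"
  proof (rule set_eqI)
    fix y show "y \<in> z1 \<inter> x2 \<longleftrightarrow> y \<in> {y\<in>{c,d}. y \<in> z1 \<and> y \<in> x2}"
      using sub(2) m by auto
  qed
  have e2: "z2 \<inter> x1 = insert a {y\<in>{c,d}. y \<in> z2 \<and> y \<in> x1}"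
  proof (rule set_eqI)
    fix y show "y \<in> z2 \<inter> x1 \<longleftrightarrow> y \<in> insert a {y\<in>{c,d}. y \<in> z2 \<and> y \<in> x1}"
      using sub(4) m by auto
  qed
  have n1: "card (z1 \<inter> x2) = of_bool (c \<in> z1 \<and> c \<in> x2) + of_bool (d \<in> z1 \<and> d \<in> x2)"
    unfolding e1 using card_filter2[OF dist(6)] .
  have n2: "card (z2 \<inter> x1) = 1 + of_bool (c \<in> z2 \<and> c \<in> x1) + of_bool (d \<in> z2 \<and> d \<in> x1)"
    unfolding e2 using card_filter2[OF dist(6)] dist by simp
  have pc: "of_bool (c \<in> z1 \<and> c \<in> x2) + of_bool (c \<in> z2 \<and> c \<in> x1) = (1::nat)"
    using cov(1,3,5) by (cases "c\<in>z1"; cases "c\<in>x2"; cases "c\<in>z2"; cases "c\<in>x1") (simp_all add: symd_def)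
  have pd: "of_bool (d \<in> z1 \<and> d \<in> x2) + of_bool (d \<in> z2 \<and> d \<in> x1) = (1::nat)"
    using cov(2,4,6) by (cases "d\<in>z1"; cases "d\<in>x2"; cases "d\<in>z2"; cases "d\<in>x1") (simp_all add: symd_def)
  have "card (z1 \<inter> x2) + card (z2 \<inter> x1) = 3" using n1 n2 pc pd by simp
  moreover have "(-1::complex) ^ card (z1 \<inter> x2) = (-1) ^ card (z2 \<inter> x1)"
    using com by (simp add: sg_def Int_commute)
  moreover have "even (card (z1 \<inter> x2)) = even (card (z2 \<inter> x1))"
    using calculation(2) by (auto simp: minus_one_power_iff split: if_splits)
  ultimately show False by presburger
qed

lemma cover_lemma:
  assumes sv: "stabilizer_state Q v" and Q: "Q = {a,b,c,d}"
    and mmc: "mm Q {a,c} v" and e: "eig Q v x z"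
    and r: "x \<inter> {a,b} \<subseteq> {a}" "z \<inter> {a,b} \<subseteq> {a}" and ain: "a \<in> x \<union> z"
  shows "d \<in> x \<union> z"
proof (rule ccontr)
  assume nd: "d \<notin> x \<union> z"
  have fQ: "finite Q" using stab_basic[OF sv] by simp
  have sub: "x \<subseteq> Q" "z \<subseteq> Q" using e unfolding eig_def by auto
  have inX: "x \<subseteq> {a,c}" "z \<subseteq> {a,c}" using sub r nd Q by blast+
  have XQ: "{a,c} \<subseteq> Q" using Q by blast
  have "x \<noteq> {} \<or> z \<noteq> {}" using ain by blast
  then show False using mm_eig_false[OF fQ XQ mmc e inX] stab_norm[OF sv] by auto
qed

lemma ame:
  assumes sv: "stabilizer_state Q v" and Q: "Q = {a,b,c,d}"
    and dist: "a \<noteq> b" "a \<noteq> c" "a \<noteq> d" "b \<noteq> c" "b \<noteq> d" "c \<noteq> d"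
    and m1: "mm Q {c,d} v" and m2: "mm Q {a,c} v" and m3: "mm Q {a,d} v"
  shows False
proof -
  obtain g where sd: "stabdata Q v g" using stab_data[OF sv] by blast
  have fQ: "finite Q" using stab_basic[OF sv] by simp
  have cQ: "card Q = 4" using Q dist by simp
  have QX: "Q - {c,d} = {a,b}" using Q dist by blast
  let ?h = "\<lambda>J. (gx g J \<inter> {a,b}, gz g J \<inter> {a,b})"
  have inj: "inj_on ?h (Pow {..<card Q})"
    using restr_inj[OF sv sd _ m1] Q QX by auto
  have img: "?h ` Pow {..<card Q} \<subseteq> Pow {a,b} \<times> Pow {a,b}" by auto
  have c1: "card (?h ` Pow {..<card Q}) = 16" using card_image[OF inj] cQ by (simp add: card_Pow)
  have c2: "card (Pow {a,b} \<times> Pow {a,b}) = 16" using dist by (simp add: card_Pow card_cartesian_product)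
  have eqs: "?h ` Pow {..<card Q} = Pow {a,b} \<times> Pow {a,b}"
    by (rule card_subset_eq) (use img c1 c2 in auto)
  have "({a},{}) \<in> Pow {a,b} \<times> Pow {a,b}" by auto
  then obtain J1 where J1: "J1 \<in> Pow {..<card Q}" "gx g J1 \<inter> {a,b} = {a}" "gz g J1 \<inter> {a,b} = {}"
    unfolding eqs[symmetric] by auto
  have "({},{a}) \<in> Pow {a,b} \<times> Pow {a,b}" by auto
  then obtain J2 where J2: "J2 \<in> Pow {..<card Q}" "gx g J2 \<inter> {a,b} = {}" "gz g J2 \<inter> {a,b} = {a}"
    unfolding eqs[symmetric] by auto
  have fJ: "finite J1" "finite J2" using J1(1) J2(1) finite_subset by auto
  have J3: "symd J1 J2 \<subseteq> {..<card Q}" using J1(1) J2(1) by (simp add: symd_sub)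
  have e1: "eig Q v (gx g J1) (gz g J1)" using gen_eig[OF fQ sd] J1(1) by auto
  have e2: "eig Q v (gx g J2) (gz g J2)" using gen_eig[OF fQ sd] J2(1) by auto
  have e3: "eig Q v (symd (gx g J1) (gx g J2)) (symd (gz g J1) (gz g J2))"
    using gen_eig[OF fQ sd J3] unfolding gen_sym[OF fJ] .
  have s1: "gx g J1 \<subseteq> Q" "gz g J1 \<subseteq> Q" using e1 unfolding eig_def by auto
  have s2: "gx g J2 \<subseteq> Q" "gz g J2 \<subseteq> Q" using e2 unfolding eig_def by auto
  have r3: "symd (gx g J1) (gx g J2) \<inter> {a,b} = {a}" "symd (gz g J1) (gz g J2) \<inter> {a,b} = {a}"
    using J1 J2 by (auto simp: symd_def)
  have Q': "Q = {a,b,d,c}" using Q by blast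
  have m2': "mm Q {a,d} v" using m3 .
  have d1: "d \<in> gx g J1 \<union> gz g J1" by (rule cover_lemma[OF sv Q m2 e1]) (use J1 in auto)
  have d2: "d \<in> gx g J2 \<union> gz g J2" by (rule cover_lemma[OF sv Q m2 e2]) (use J2 in auto)
  have d3: "d \<in> symd (gx g J1) (gx g J2) \<union> symd (gz g J1) (gz g J2)"
    by (rule cover_lemma[OF sv Q m2 e3]) (use r3 in auto)
  have c1: "c \<in> gx g J1 \<union> gz g J1" by (rule cover_lemma[OF sv Q' m3 e1]) (use J1 in auto)
  have c2: "c \<in> gx g J2 \<union> gz g J2" by (rule cover_lemma[OF sv Q' m3 e2]) (use J2 in auto)
  have c3: "c \<in> symd (gx g J1) (gx g J2) \<union> symd (gz g J1) (gz g J2)"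
    by (rule cover_lemma[OF sv Q' m3 e3]) (use r3 in auto)
  obtain S0 where S0: "S0 \<subseteq> Q" "v S0 \<noteq> 0" using stab_nz[OF sv] by blast
  have com: "sg (gz g J1) (gx g J2) = sg (gz g J2) (gx g J1)"
    using eig_comm[OF fQ e1 e2 S0] .
  show False
    using comb_final[OF dist s1[unfolded Q] s2[unfolded Q] J1(2,3) J2(2,3) c1 d1 c2 d2 c3 d3]
      com by (simp add: s1 s2)
qed

lemma sum_prod_pow:
  fixes F :: "nat \<Rightarrow> nat set \<Rightarrow> complex"
  assumes "finite I" "\<forall>i\<in>I. finite (P i)" "\<forall>i\<in>I. \<forall>j\<in>I. i \<noteq> j \<longrightarrow> P i \<inter> P j = {}"
  shows "(\<Sum>R\<in>Pow (\<Union>i\<in>I. P i). \<Prod>i\<in>I. F i (R \<inter> P i)) = (\<Prod>i\<in>I. \<Sum>R\<in>Pow (P i). F i R)"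
  using assms
proof (induction I rule: finite_induct)
  case empty
  then show ?case by simp
next
  case (insert j I)
  have fj: "finite (P j)" using insert.prems by auto
  have fI: "finite (\<Union>i\<in>I. P i)" using insert by auto
  have disj: "P j \<inter> (\<Union>i\<in>I. P i) = {}" using insert.prems insert.hyps(2) by fastforce
  have IH: "(\<Sum>R\<in>Pow (\<Union>i\<in>I. P i). \<Prod>i\<in>I. F i (R \<inter> P i)) = (\<Prod>i\<in>I. \<Sum>R\<in>Pow (P i). F i R)"
    using insert.IH insert.prems by (simp add: Ball_def)
  have "(\<Sum>R\<in>Pow (\<Union>i\<in>insert j I. P i). \<Prod>i\<in>insert j I. F i (R \<inter> P i))
      = (\<Sum>R\<in>Pow (P j \<union> (\<Union>i\<in>I. P i)). \<Prod>i\<in>insert j I. F i (R \<inter> P i))" by simp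
  also have "\<dots> = (\<Sum>R1\<in>Pow (P j). \<Sum>R2\<in>Pow (\<Union>i\<in>I. P i). \<Prod>i\<in>insert j I. F i ((R1 \<union> R2) \<inter> P i))"
    by (rule sum_pow_split[OF fj fI disj])
  also have "\<dots> = (\<Sum>R1\<in>Pow (P j). \<Sum>R2\<in>Pow (\<Union>i\<in>I. P i). F j R1 * (\<Prod>i\<in>I. F i (R2 \<inter> P i)))"
  proof (intro sum.cong refl)
    fix R1 R2 assume R1: "R1 \<in> Pow (P j)" and R2: "R2 \<in> Pow (\<Union>i\<in>I. P i)"
    have a: "(R1 \<union> R2) \<inter> P j = R1" using R1 R2 disj by auto
    have b: "(R1 \<union> R2) \<inter> P i = R2 \<inter> P i" if "i \<in> I" for i
    proof -
      have "P j \<inter> P i = {}" using insert.prems that insert.hyps(2) by (metis insertCI)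
      then show ?thesis using R1 by auto
    qed
    show "(\<Prod>i\<in>insert j I. F i ((R1 \<union> R2) \<inter> P i)) = F j R1 * (\<Prod>i\<in>I. F i (R2 \<inter> P i))"
      using insert.hyps a b by (simp add: prod.insert)
  qed
  also have "\<dots> = (\<Sum>R1\<in>Pow (P j). F j R1) * (\<Sum>R2\<in>Pow (\<Union>i\<in>I. P i). \<Prod>i\<in>I. F i (R2 \<inter> P i))"
    by (simp add: sum_product)
  also have "\<dots> = (\<Prod>i\<in>insert j I. \<Sum>R\<in>Pow (P i). F i R)"
    using insert.hyps IH by simp
  finally show ?case .
qed

lemma prod_indicator:
  assumes "finite I"
  shows "(\<Prod>i\<in>I. (if p i then 1 else 0 :: complex)) = (if \<forall>i\<in>I. p i then 1 else 0)"
proof (cases "\<forall>i\<in>I. p i")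
  case True then show ?thesis by simp
next
  case False
  then show ?thesis using assms by (auto simp: prod_zero_iff)
qed

definition lopI :: "(nat \<Rightarrow> nat set) \<Rightarrow> nat set \<Rightarrow> (nat \<Rightarrow> op) \<Rightarrow> op" where
  "lopI P I U = (\<lambda>S T. \<Prod>i\<in>I. U i (S \<inter> P i) (T \<inter> P i))"

lemma unit_rows:
  assumes "unitary_on Q U" "A \<subseteq> Q" "B \<subseteq> Q"
  shows "(\<Sum>R\<in>Pow Q. U A R * cnj (U B R)) = (if A = B then 1 else 0)"
proof -
  have "mmul Q U (adj U) A B = idm Q A B" using assms unfolding unitary_on_def by simp
  then show ?thesis using assms(2) by (simp add: mmul_def adj_def idm_def)
qed

lemma unit_cols:
  assumes "unitary_on Q U" "A \<subseteq> Q" "B \<subseteq> Q"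
  shows "(\<Sum>R\<in>Pow Q. U R A * cnj (U R B)) = (if A = B then 1 else 0)"
proof -
  have "mmul Q (adj U) U B A = idm Q B A" using assms unfolding unitary_on_def by simp
  then have "(\<Sum>R\<in>Pow Q. cnj (U R B) * U R A) = (if B = A then 1 else 0)"
    using assms(3) by (simp add: mmul_def adj_def idm_def)
  then show ?thesis by (simp add: mult.commute eq_commute)
qed

lemma lopI_rows:
  assumes "finite I" "\<forall>i\<in>I. finite (P i)" "\<forall>i\<in>I. \<forall>j\<in>I. i \<noteq> j \<longrightarrow> P i \<inter> P j = {}"
    and "\<forall>i\<in>I. unitary_on (P i) (U i)"
    and S: "S \<subseteq> (\<Union>i\<in>I. P i)" and S': "S' \<subseteq> (\<Union>i\<in>I. P i)"
  shows "(\<Sum>T\<in>Pow (\<Union>i\<in>I. P i). lopI P I U S T * cnj (lopI P I U S' T)) = (if S = S' then 1 else 0)"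
proof -
  have "(\<Sum>T\<in>Pow (\<Union>i\<in>I. P i). lopI P I U S T * cnj (lopI P I U S' T))
      = (\<Sum>T\<in>Pow (\<Union>i\<in>I. P i). \<Prod>i\<in>I. U i (S \<inter> P i) (T \<inter> P i) * cnj (U i (S' \<inter> P i) (T \<inter> P i)))"
    by (simp add: lopI_def cnj_prod prod.distrib)
  also have "\<dots> = (\<Prod>i\<in>I. \<Sum>R\<in>Pow (P i). U i (S \<inter> P i) R * cnj (U i (S' \<inter> P i) R))"
    by (rule sum_prod_pow[OF assms(1-3)])
  also have "\<dots> = (\<Prod>i\<in>I. if S \<inter> P i = S' \<inter> P i then 1 else 0)"
    by (rule prod.cong[OF refl]) (use assms(4) unit_rows in auto)
  also have "\<dots> = (if \<forall>i\<in>I. S \<inter> P i = S' \<inter> P i then 1 else 0)"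
    by (rule prod_indicator[OF assms(1)])
  also have "(\<forall>i\<in>I. S \<inter> P i = S' \<inter> P i) = (S = S')"
  proof
    assume h: "\<forall>i\<in>I. S \<inter> P i = S' \<inter> P i"
    show "S = S'"
    proof (rule set_eqI)
      fix x show "x \<in> S \<longleftrightarrow> x \<in> S'"
      proof
        assume "x \<in> S" then obtain i where "i \<in> I" "x \<in> P i" using S by auto
        then show "x \<in> S'" using h \<open>x \<in> S\<close> by blast
      next
        assume "x \<in> S'" then obtain i where "i \<in> I" "x \<in> P i" using S' by auto
        then show "x \<in> S" using h \<open>x \<in> S'\<close> by blast
      qed
    qed
  qed simp
  finally show ?thesis .
qed

lemma lopI_cols:
  assumes "finite I" "\<forall>i\<in>I. finite (P i)" "\<forall>i\<in>I. \<forall>j\<in>I. i \<noteq> j \<longrightarrow> P i \<inter> P j = {}"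
    and "\<forall>i\<in>I. unitary_on (P i) (U i)"
    and S: "S \<subseteq> (\<Union>i\<in>I. P i)" and S': "S' \<subseteq> (\<Union>i\<in>I. P i)"
  shows "(\<Sum>T\<in>Pow (\<Union>i\<in>I. P i). lopI P I U T S * cnj (lopI P I U T S')) = (if S = S' then 1 else 0)"
proof -
  have "(\<Sum>T\<in>Pow (\<Union>i\<in>I. P i). lopI P I U T S * cnj (lopI P I U T S'))
      = (\<Sum>T\<in>Pow (\<Union>i\<in>I. P i). \<Prod>i\<in>I. U i (T \<inter> P i) (S \<inter> P i) * cnj (U i (T \<inter> P i) (S' \<inter> P i)))"
    by (simp add: lopI_def cnj_prod prod.distrib)
  also have "\<dots> = (\<Prod>i\<in>I. \<Sum>R\<in>Pow (P i). U i R (S \<inter> P i) * cnj (U i R (S' \<inter> P i)))"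
    by (rule sum_prod_pow[OF assms(1-3)])
  also have "\<dots> = (\<Prod>i\<in>I. if S \<inter> P i = S' \<inter> P i then 1 else 0)"
    by (rule prod.cong[OF refl]) (use assms(4) unit_cols in auto)
  also have "\<dots> = (if \<forall>i\<in>I. S \<inter> P i = S' \<inter> P i then 1 else 0)"
    by (rule prod_indicator[OF assms(1)])
  also have "(\<forall>i\<in>I. S \<inter> P i = S' \<inter> P i) = (S = S')"
  proof
    assume h: "\<forall>i\<in>I. S \<inter> P i = S' \<inter> P i"
    show "S = S'"
    proof (rule set_eqI)
      fix x show "x \<in> S \<longleftrightarrow> x \<in> S'"
      proof
        assume "x \<in> S" then obtain i where "i \<in> I" "x \<in> P i" using S by auto
        then show "x \<in> S'" using h \<open>x \<in> S\<close> by blast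
      next
        assume "x \<in> S'" then obtain i where "i \<in> I" "x \<in> P i" using S' by auto
        then show "x \<in> S" using h \<open>x \<in> S'\<close> by blast
      qed
    qed
  qed simp
  finally show ?thesis .
qed

lemma ip_lin:
  fixes a b :: "nat set \<Rightarrow> complex" and x y :: "nat set \<Rightarrow> nat set \<Rightarrow> complex"
  shows "(\<Sum>R\<in>C. (\<Sum>i\<in>I. a i * x i R) * cnj (\<Sum>j\<in>J. b j * y j R))
       = (\<Sum>i\<in>I. \<Sum>j\<in>J. a i * cnj (b j) * (\<Sum>R\<in>C. x i R * cnj (y j R)))"
proof -
  have "(\<Sum>R\<in>C. (\<Sum>i\<in>I. a i * x i R) * cnj (\<Sum>j\<in>J. b j * y j R))
      = (\<Sum>R\<in>C. \<Sum>i\<in>I. \<Sum>j\<in>J. a i * cnj (b j) * (x i R * cnj (y j R)))"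
    by (simp add: cnj_sum sum_product mult_ac)
  also have "\<dots> = (\<Sum>i\<in>I. \<Sum>R\<in>C. \<Sum>j\<in>J. a i * cnj (b j) * (x i R * cnj (y j R)))"
    by (rule sum.swap)
  also have "\<dots> = (\<Sum>i\<in>I. \<Sum>j\<in>J. \<Sum>R\<in>C. a i * cnj (b j) * (x i R * cnj (y j R)))"
    by (rule sum.cong[OF refl], rule sum.swap)
  also have "\<dots> = (\<Sum>i\<in>I. \<Sum>j\<in>J. a i * cnj (b j) * (\<Sum>R\<in>C. x i R * cnj (y j R)))"
    by (simp add: sum_distrib_left)
  finally show ?thesis .
qed

lemma sum_delta_mult:
  fixes f :: "nat set \<Rightarrow> complex"
  assumes "finite J" "i \<in> J"
  shows "(\<Sum>j\<in>J. f j * (if i = j then c else 0)) = f i * c"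
proof -
  have "(\<Sum>j\<in>J. f j * (if i = j then c else 0)) = (\<Sum>j\<in>J. if i = j then f j * c else 0)"
    by (rule sum.cong) auto
  also have "\<dots> = f i * c" using assms by simp
  finally show ?thesis .
qed

lemma transfer_abstract:
  fixes A B :: op and g :: "nat set \<Rightarrow> nat set \<Rightarrow> complex"
  assumes fX: "finite X" and fY: "finite Y"
    and uA: "\<forall>S\<in>Pow X. \<forall>S'\<in>Pow X. (\<Sum>T\<in>Pow X. A S T * cnj (A S' T)) = (if S = S' then 1 else 0)"
    and uB: "\<forall>T\<in>Pow Y. \<forall>T'\<in>Pow Y. (\<Sum>R\<in>Pow Y. B R T * cnj (B R T')) = (if T = T' then 1 else 0)"
    and mg: "\<forall>T1\<in>Pow X. \<forall>T1'\<in>Pow X. (\<Sum>T2\<in>Pow Y. g T1 T2 * cnj (g T1' T2)) = (if T1 = T1' then \<kappa> else 0)"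
    and S: "S \<in> Pow X" and S': "S' \<in> Pow X"
  shows "(\<Sum>R\<in>Pow Y. (\<Sum>T1\<in>Pow X. A S T1 * (\<Sum>T2\<in>Pow Y. g T1 T2 * B R T2))
              * cnj (\<Sum>T1\<in>Pow X. A S' T1 * (\<Sum>T2\<in>Pow Y. g T1 T2 * B R T2)))
         = (if S = S' then \<kappa> else 0)"
proof -
  define h where "h T1 R = (\<Sum>T2\<in>Pow Y. g T1 T2 * B R T2)" for T1 R
  have hh: "(\<Sum>R\<in>Pow Y. h T1 R * cnj (h T1' R)) = (if T1 = T1' then \<kappa> else 0)"
    if T1: "T1 \<in> Pow X" and T1': "T1' \<in> Pow X" for T1 T1'
  proof -
    have "(\<Sum>R\<in>Pow Y. h T1 R * cnj (h T1' R))
        = (\<Sum>T2\<in>Pow Y. \<Sum>T2'\<in>Pow Y. g T1 T2 * cnj (g T1' T2') * (\<Sum>R\<in>Pow Y. B R T2 * cnj (B R T2')))"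
      unfolding h_def by (rule ip_lin)
    also have "\<dots> = (\<Sum>T2\<in>Pow Y. \<Sum>T2'\<in>Pow Y. g T1 T2 * cnj (g T1' T2') * (if T2 = T2' then 1 else 0))"
      by (intro sum.cong refl) (use uB in auto)
    also have "\<dots> = (\<Sum>T2\<in>Pow Y. g T1 T2 * cnj (g T1' T2))"
    proof (rule sum.cong[OF refl])
      fix T2 assume T2: "T2 \<in> Pow Y"
      have "(\<Sum>T2'\<in>Pow Y. g T1 T2 * cnj (g T1' T2') * (if T2 = T2' then 1 else 0)) = g T1 T2 * cnj (g T1' T2) * 1"
        by (rule sum_delta_mult[where f="\<lambda>T2'. g T1 T2 * cnj (g T1' T2')"]) (use fY T2 in auto)
      then show "(\<Sum>T2'\<in>Pow Y. g T1 T2 * cnj (g T1' T2') * (if T2 = T2' then 1 else 0)) = g T1 T2 * cnj (g T1' T2)"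
        by simp
    qed
    also have "\<dots> = (if T1 = T1' then \<kappa> else 0)" using mg T1 T1' by blast
    finally show ?thesis .
  qed
  have "(\<Sum>R\<in>Pow Y. (\<Sum>T1\<in>Pow X. A S T1 * h T1 R) * cnj (\<Sum>T1\<in>Pow X. A S' T1 * h T1 R))
      = (\<Sum>T1\<in>Pow X. \<Sum>T1'\<in>Pow X. A S T1 * cnj (A S' T1') * (\<Sum>R\<in>Pow Y. h T1 R * cnj (h T1' R)))"
    by (rule ip_lin)
  also have "\<dots> = (\<Sum>T1\<in>Pow X. \<Sum>T1'\<in>Pow X. A S T1 * cnj (A S' T1') * (if T1 = T1' then \<kappa> else 0))"
    by (intro sum.cong refl) (use hh in auto)
  also have "\<dots> = (\<Sum>T1\<in>Pow X. A S T1 * cnj (A S' T1) * \<kappa>)"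
  proof (rule sum.cong[OF refl])
    fix T1 assume T1: "T1 \<in> Pow X"
    show "(\<Sum>T1'\<in>Pow X. A S T1 * cnj (A S' T1') * (if T1 = T1' then \<kappa> else 0)) = A S T1 * cnj (A S' T1) * \<kappa>"
      by (rule sum_delta_mult[where f="\<lambda>T1'. A S T1 * cnj (A S' T1')"]) (use fX T1 in auto)
  qed
  also have "\<dots> = (\<Sum>T1\<in>Pow X. A S T1 * cnj (A S' T1)) * \<kappa>" by (simp add: sum_distrib_right)
  also have "\<dots> = (if S = S' then \<kappa> else 0)" using uA S S' by simp
  finally show ?thesis unfolding h_def .
qed

definition P6 :: "nat \<Rightarrow> nat set" where "P6 i = parties6 ! i"

lemma lessThan4: "{..<4::nat} = {0,1,2,3}" by auto

lemma P6_vals: "P6 0 = {1,4}" "P6 1 = {3,6}" "P6 2 = {2}" "P6 3 = {5}" "P6 (Suc 0) = {3,6}"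
  by (simp_all add: P6_def parties6_def numeral_eq_Suc)

lemma len_parties6: "length parties6 = 4" by (simp add: parties6_def)

lemma P6_finite:
  assumes "i < 4" shows "finite (P6 i)"
proof -
  have "i = 0 \<or> i = 1 \<or> i = 2 \<or> i = 3" using assms by auto
  then show ?thesis by (auto simp: P6_vals)
qed

lemma P6_disj: "\<forall>i\<in>I. \<forall>j\<in>I. i \<noteq> j \<longrightarrow> P6 i \<inter> P6 j = {}" if "I \<subseteq> {..<4}"
proof -
  have "\<forall>i\<in>{..<4::nat}. \<forall>j\<in>{..<4::nat}. i \<noteq> j \<longrightarrow> P6 i \<inter> P6 j = {}"
    unfolding lessThan4 by (simp add: P6_vals)
  then show ?thesis using that by blast
qed

lemma P6_cover: "(\<Union>i\<in>{..<4::nat}. P6 i) = Q6"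
  unfolding lessThan4 by (auto simp: P6_vals Q6_def)

lemma Q6_finite: "finite Q6" by (simp add: Q6_def)

lemma split_XY:
  assumes I: "I \<subseteq> {..<4}"
  defines "X \<equiv> (\<Union>i\<in>I. P6 i)" and "Y \<equiv> (\<Union>i\<in>{..<4} - I. P6 i)"
  shows "Q6 - X = Y" "X \<inter> Y = {}" "X \<subseteq> Q6" "X \<union> Y = Q6"
proof -
  have d: "\<forall>i\<in>{..<4}. \<forall>j\<in>{..<4}. i \<noteq> j \<longrightarrow> P6 i \<inter> P6 j = {}" using P6_disj[of "{..<4}"] by simp
  have XY: "X \<inter> Y = {}"
  proof -
    have "P6 i \<inter> P6 j = {}" if "i \<in> I" "j \<in> {..<4} - I" for i j
      using d that I by (metis DiffE subsetD)
    then show ?thesis unfolding X_def Y_def by blast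
  qed
  have U: "X \<union> Y = Q6"
  proof -
    have "{..<4} = I \<union> ({..<4} - I)" using I by blast
    then have "(\<Union>i\<in>{..<4::nat}. P6 i) = X \<union> Y" unfolding X_def Y_def by (metis UN_Un)
    then show ?thesis using P6_cover by simp
  qed
  show "X \<inter> Y = {}" by (rule XY)
  show "X \<union> Y = Q6" by (rule U)
  show "Q6 - X = Y" using XY U by blast
  show "X \<subseteq> Q6" using U by blast
qed

lemma local_factor:
  assumes I: "I \<subseteq> {..<4}" and XY: "X \<inter> Y = {}" and X: "X \<union> Y = Q6"
    and PX: "\<forall>i\<in>I. P6 i \<subseteq> X" and PY: "\<forall>i\<in>{..<4} - I. P6 i \<subseteq> Y"
    and S: "S \<subseteq> X" and T1: "T1 \<subseteq> X" and R: "R \<subseteq> Y" and T2: "T2 \<subseteq> Y"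
  shows "local_op Q6 parties6 U (S \<union> R) (T1 \<union> T2) = lopI P6 I U S T1 * lopI P6 ({..<4} - I) U R T2"
proof -
  have sub: "S \<union> R \<subseteq> Q6" "T1 \<union> T2 \<subseteq> Q6" using S R T1 T2 X by auto
  have "local_op Q6 parties6 U (S \<union> R) (T1 \<union> T2) = (\<Prod>i\<in>{..<4}. U i ((S \<union> R) \<inter> P6 i) ((T1 \<union> T2) \<inter> P6 i))"
    using sub by (simp add: local_op_def len_parties6 P6_def)
  also have "\<dots> = (\<Prod>i\<in>{..<4} - I. U i ((S \<union> R) \<inter> P6 i) ((T1 \<union> T2) \<inter> P6 i)) *
                  (\<Prod>i\<in>I. U i ((S \<union> R) \<inter> P6 i) ((T1 \<union> T2) \<inter> P6 i))"
    by (rule prod.subset_diff[OF I]) simp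
  also have "(\<Prod>i\<in>I. U i ((S \<union> R) \<inter> P6 i) ((T1 \<union> T2) \<inter> P6 i)) = lopI P6 I U S T1"
    unfolding lopI_def
  proof (rule prod.cong[OF refl])
    fix i assume i: "i \<in> I"
    have "(S \<union> R) \<inter> P6 i = S \<inter> P6 i" "(T1 \<union> T2) \<inter> P6 i = T1 \<inter> P6 i"
      using PX i R T2 XY by blast+
    then show "U i ((S \<union> R) \<inter> P6 i) ((T1 \<union> T2) \<inter> P6 i) = U i (S \<inter> P6 i) (T1 \<inter> P6 i)" by simp
  qed
  also have "(\<Prod>i\<in>{..<4} - I. U i ((S \<union> R) \<inter> P6 i) ((T1 \<union> T2) \<inter> P6 i)) = lopI P6 ({..<4} - I) U R T2"
    unfolding lopI_def
  proof (rule prod.cong[OF refl])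
    fix i assume i: "i \<in> {..<4} - I"
    have "(S \<union> R) \<inter> P6 i = R \<inter> P6 i" "(T1 \<union> T2) \<inter> P6 i = T2 \<inter> P6 i"
      using PY i S T1 XY by blast+
    then show "U i ((S \<union> R) \<inter> P6 i) ((T1 \<union> T2) \<inter> P6 i) = U i (R \<inter> P6 i) (T2 \<inter> P6 i)" by simp
  qed
  finally show ?thesis by (simp add: mult.commute)
qed

lemma mm_transfer:
  assumes I: "I \<subseteq> {..<4}" and uni: "\<forall>i<4. unitary_on (P6 i) (U i)"
    and mG: "mm Q6 (\<Union>i\<in>I. P6 i) G"
  shows "mm Q6 (\<Union>i\<in>I. P6 i) (apply_op Q6 (local_op Q6 parties6 U) G)"
proof -
  define X where "X = (\<Union>i\<in>I. P6 i)"
  define Y where "Y = (\<Union>i\<in>{..<4} - I. P6 i)"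
  define J where "J = {..<4::nat} - I"
  have sp: "Q6 - X = Y" "X \<inter> Y = {}" "X \<subseteq> Q6" "X \<union> Y = Q6"
    using split_XY[OF I] unfolding X_def Y_def by auto
  have fX: "finite X" "finite Y" using sp Q6_finite finite_subset by auto
  have fI: "finite I" "finite J" using I finite_subset unfolding J_def by auto
  have J: "J \<subseteq> {..<4}" unfolding J_def by auto
  have PX: "\<forall>i\<in>I. P6 i \<subseteq> X" unfolding X_def by auto
  have PY: "\<forall>i\<in>{..<4} - I. P6 i \<subseteq> Y" unfolding Y_def by auto
  obtain \<kappa> where k: "\<kappa> \<noteq> 0" "\<forall>S\<in>Pow X. \<forall>T\<in>Pow X.
      (\<Sum>R\<in>Pow (Q6 - X). G (S \<union> R) * cnj (G (T \<union> R))) = (if S = T then \<kappa> else 0)"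
    using mG unfolding mm_def X_def by blast
  let ?A = "lopI P6 I U" and ?B = "lopI P6 J U"
  have finI: "\<forall>i\<in>I. finite (P6 i)" "\<forall>i\<in>J. finite (P6 i)" using I J P6_finite by auto
  have uniI: "\<forall>i\<in>I. unitary_on (P6 i) (U i)" "\<forall>i\<in>J. unitary_on (P6 i) (U i)" using I J uni by auto
  have uA: "\<forall>S\<in>Pow X. \<forall>S'\<in>Pow X. (\<Sum>T\<in>Pow X. ?A S T * cnj (?A S' T)) = (if S = S' then 1 else 0)"
  proof (intro ballI)
    fix S S' assume "S \<in> Pow X" "S' \<in> Pow X"
    then show "(\<Sum>T\<in>Pow X. ?A S T * cnj (?A S' T)) = (if S = S' then 1 else 0)"
      unfolding X_def by (intro lopI_rows[OF fI(1) finI(1) P6_disj[OF I] uniI(1)]) auto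
  qed
  have YJ: "Y = (\<Union>i\<in>J. P6 i)" unfolding Y_def J_def ..
  have uB: "\<forall>T\<in>Pow Y. \<forall>T'\<in>Pow Y. (\<Sum>R\<in>Pow Y. ?B R T * cnj (?B R T')) = (if T = T' then 1 else 0)"
  proof (intro ballI)
    fix S S' assume "S \<in> Pow Y" "S' \<in> Pow Y"
    then show "(\<Sum>T\<in>Pow Y. ?B T S * cnj (?B T S')) = (if S = S' then 1 else 0)"
      unfolding YJ by (intro lopI_cols[OF fI(2) finI(2) P6_disj[OF J] uniI(2)]) auto
  qed
  have mg: "\<forall>T1\<in>Pow X. \<forall>T1'\<in>Pow X. (\<Sum>T2\<in>Pow Y. G (T1 \<union> T2) * cnj (G (T1' \<union> T2))) = (if T1 = T1' then \<kappa> else 0)"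
    using k(2) sp(1) by simp
  let ?W = "apply_op Q6 (local_op Q6 parties6 U) G"
  have W: "?W (S \<union> R) = (\<Sum>T1\<in>Pow X. ?A S T1 * (\<Sum>T2\<in>Pow Y. G (T1 \<union> T2) * ?B R T2))"
    if S: "S \<subseteq> X" and R: "R \<subseteq> Y" for S R
  proof -
    have "S \<union> R \<subseteq> Q6" using S R sp by auto
    then have "?W (S \<union> R) = (\<Sum>T\<in>Pow Q6. local_op Q6 parties6 U (S \<union> R) T * G T)"
      by (simp add: apply_op_def)
    also have "\<dots> = (\<Sum>T1\<in>Pow X. \<Sum>T2\<in>Pow Y. local_op Q6 parties6 U (S \<union> R) (T1 \<union> T2) * G (T1 \<union> T2))"
      unfolding sp(4)[symmetric] by (rule sum_pow_split[OF fX sp(2)])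
    also have "\<dots> = (\<Sum>T1\<in>Pow X. \<Sum>T2\<in>Pow Y. ?A S T1 * (G (T1 \<union> T2) * ?B R T2))"
    proof (intro sum.cong refl)
      fix T1 T2 assume "T1 \<in> Pow X" "T2 \<in> Pow Y"
      then show "local_op Q6 parties6 U (S \<union> R) (T1 \<union> T2) * G (T1 \<union> T2) = ?A S T1 * (G (T1 \<union> T2) * ?B R T2)"
        using local_factor[OF I sp(2) sp(4) PX PY S _ R, of T1 T2 U] unfolding J_def by simp
    qed
    also have "\<dots> = (\<Sum>T1\<in>Pow X. ?A S T1 * (\<Sum>T2\<in>Pow Y. G (T1 \<union> T2) * ?B R T2))"
      by (simp add: sum_distrib_left)
    finally show ?thesis .
  qed
  have "\<forall>S\<in>Pow X. \<forall>S'\<in>Pow X. (\<Sum>R\<in>Pow (Q6 - X). ?W (S \<union> R) * cnj (?W (S' \<union> R))) = (if S = S' then \<kappa> else 0)"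
  proof (intro ballI)
    fix S S' assume S: "S \<in> Pow X" and S': "S' \<in> Pow X"
    have "(\<Sum>R\<in>Pow (Q6 - X). ?W (S \<union> R) * cnj (?W (S' \<union> R)))
        = (\<Sum>R\<in>Pow Y. (\<Sum>T1\<in>Pow X. ?A S T1 * (\<Sum>T2\<in>Pow Y. G (T1 \<union> T2) * ?B R T2))
              * cnj (\<Sum>T1\<in>Pow X. ?A S' T1 * (\<Sum>T2\<in>Pow Y. G (T1 \<union> T2) * ?B R T2)))"
      unfolding sp(1) by (rule sum.cong[OF refl]) (use S S' W in auto)
    also have "\<dots> = (if S = S' then \<kappa> else 0)"
      by (rule transfer_abstract[OF fX uA uB mg S S'])
    finally show "(\<Sum>R\<in>Pow (Q6 - X). ?W (S \<union> R) * cnj (?W (S' \<union> R))) = (if S = S' then \<kappa> else 0)" .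
  qed
  then show ?thesis unfolding mm_def X_def[symmetric] using k(1) by blast
qed

lemma mm_product:
  assumes d: "Q1 \<inter> Q2 = {}" and f: "finite Q1" "finite Q2" and XQ: "X \<subseteq> Q1 \<union> Q2"
    and mW: "mm (Q1 \<union> Q2) X (\<lambda>S. c * tensor_state Q1 Q2 v w S)"
  shows "mm Q1 (X \<inter> Q1) v"
proof -
  let ?W = "\<lambda>S. c * tensor_state Q1 Q2 v w S"
  obtain \<kappa> where k: "\<kappa> \<noteq> 0" "\<forall>S\<in>Pow X. \<forall>T\<in>Pow X.
      (\<Sum>R\<in>Pow (Q1 \<union> Q2 - X). ?W (S \<union> R) * cnj (?W (T \<union> R))) = (if S = T then \<kappa> else 0)"
    using mW unfolding mm_def by blast
  define Y1 where "Y1 = Q1 - X"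
  define Y2 where "Y2 = Q2 - X"
  have fY: "finite Y1" "finite Y2" using f unfolding Y1_def Y2_def by auto
  have dY: "Y1 \<inter> Y2 = {}" using d unfolding Y1_def Y2_def by auto
  have QY: "Q1 \<union> Q2 - X = Y1 \<union> Y2" unfolding Y1_def Y2_def by auto
  define r2 where "r2 = (\<Sum>R2\<in>Pow Y2. w R2 * cnj (w R2))"
  define \<rho> where "\<rho> S T = (\<Sum>R1\<in>Pow Y1. v (S \<union> R1) * cnj (v (T \<union> R1)))" for S T
  have key: "(c * cnj c * r2) * \<rho> S T = (if S = T then \<kappa> else 0)"
    if S: "S \<in> Pow (X \<inter> Q1)" and T: "T \<in> Pow (X \<inter> Q1)" for S T
  proof -
    have "(\<Sum>R\<in>Pow (Q1 \<union> Q2 - X). ?W (S \<union> R) * cnj (?W (T \<union> R)))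
        = (\<Sum>R1\<in>Pow Y1. \<Sum>R2\<in>Pow Y2. ?W (S \<union> (R1 \<union> R2)) * cnj (?W (T \<union> (R1 \<union> R2))))"
      unfolding QY by (rule sum_pow_split[OF fY dY])
    also have "\<dots> = (\<Sum>R1\<in>Pow Y1. \<Sum>R2\<in>Pow Y2. (c * cnj c) * (v (S \<union> R1) * cnj (v (T \<union> R1))) * (w R2 * cnj (w R2)))"
    proof (intro sum.cong refl)
      fix R1 R2 assume R1: "R1 \<in> Pow Y1" and R2: "R2 \<in> Pow Y2"
      have a: "S \<union> (R1 \<union> R2) \<subseteq> Q1 \<union> Q2" "T \<union> (R1 \<union> R2) \<subseteq> Q1 \<union> Q2"
        using S T R1 R2 unfolding Y1_def Y2_def by auto
      have b: "(S \<union> (R1 \<union> R2)) \<inter> Q1 = S \<union> R1" "(T \<union> (R1 \<union> R2)) \<inter> Q1 = T \<union> R1"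
        using S T R1 R2 d unfolding Y1_def Y2_def by auto
      have c: "(S \<union> (R1 \<union> R2)) \<inter> Q2 = R2" "(T \<union> (R1 \<union> R2)) \<inter> Q2 = R2"
        using S T R1 R2 d unfolding Y1_def Y2_def by auto
      show "?W (S \<union> (R1 \<union> R2)) * cnj (?W (T \<union> (R1 \<union> R2))) =
            (c * cnj c) * (v (S \<union> R1) * cnj (v (T \<union> R1))) * (w R2 * cnj (w R2))"
        unfolding tensor_state_def using a b c by (simp add: mult_ac)
    qed
    also have "\<dots> = (\<Sum>R1\<in>Pow Y1. \<Sum>R2\<in>Pow Y2. (c * cnj c) * ((v (S \<union> R1) * cnj (v (T \<union> R1))) * (w R2 * cnj (w R2))))"
      by (simp only: mult.assoc)
    also have "\<dots> = (c * cnj c) * (\<Sum>R1\<in>Pow Y1. \<Sum>R2\<in>Pow Y2. (v (S \<union> R1) * cnj (v (T \<union> R1))) * (w R2 * cnj (w R2)))"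
      by (simp add: sum_distrib_left)
    also have "\<dots> = (c * cnj c) * (\<rho> S T * r2)"
      unfolding r2_def \<rho>_def by (simp only: sum_product)
    also have "\<dots> = (c * cnj c * r2) * \<rho> S T" by (simp only: mult_ac)
    finally show ?thesis using k(2) S T by auto
  qed
  have "(c * cnj c * r2) * \<rho> {} {} = \<kappa>" using key[of "{}" "{}"] by simp
  then have mu: "c * cnj c * r2 \<noteq> 0" using k(1) by auto
  have "\<forall>S\<in>Pow (X \<inter> Q1). \<forall>T\<in>Pow (X \<inter> Q1). \<rho> S T = (if S = T then \<kappa> / (c * cnj c * r2) else 0)"
  proof (intro ballI)
    fix S T assume "S \<in> Pow (X \<inter> Q1)" "T \<in> Pow (X \<inter> Q1)"
    then have "(c * cnj c * r2) * \<rho> S T = (if S = T then \<kappa> else 0)" by (rule key)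
    then show "\<rho> S T = (if S = T then \<kappa> / (c * cnj c * r2) else 0)" using mu
      by (cases "S = T") (auto simp: field_simps)
  qed
  moreover have "Q1 - X \<inter> Q1 = Y1" unfolding Y1_def by auto
  moreover have "\<kappa> / (c * cnj c * r2) \<noteq> 0" using k(1) mu by simp
  ultimately show ?thesis unfolding mm_def \<rho>_def by metis
qed

lemma tensor_swap: "tensor_state Q1 Q2 v w = tensor_state Q2 Q1 w v"
  unfolding tensor_state_def by (auto simp: Un_commute mult.commute)

lemma nbrs6_vals: "nbrs6 1 = {2,3,4}" "nbrs6 2 = {1,3,5}" "nbrs6 3 = {1,2,6}"
  "nbrs6 4 = {1,5,6}" "nbrs6 5 = {2,4,6}" "nbrs6 6 = {3,4,5}" "nbrs6 (Suc 0) = {2,3,4}"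
  by (auto simp: nbrs6_def E6_def doubleton_eq_iff)

lemma Q6_cases: "u \<in> Q6 \<Longrightarrow> u = 1 \<or> u = 2 \<or> u = 3 \<or> u = 4 \<or> u = 5 \<or> u = 6"
  by (auto simp: Q6_def)

lemma nbrs6_props: "u \<in> Q6 \<Longrightarrow> u \<notin> nbrs6 u \<and> nbrs6 u \<subseteq> Q6 \<and> finite (nbrs6 u)"
  by (drule Q6_cases) (auto simp: nbrs6_vals Q6_def)

lemma G_flip:
  assumes st: "\<forall>u\<in>Q6. apply_op Q6 (pauli Q6 {u} (nbrs6 u)) G = G"
    and u: "u \<in> Q6" and Z: "Z \<subseteq> Q6"
  shows "G (symd Z {u}) = sg (nbrs6 u) Z * G Z"
proof -
  have np: "u \<notin> nbrs6 u" using nbrs6_props[OF u] by simp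
  have S: "symd Z {u} \<subseteq> Q6" using Z u by (simp add: symd_sub)
  have "G (symd Z {u}) = apply_op Q6 (pauli Q6 {u} (nbrs6 u)) G (symd Z {u})" using st u by simp
  also have "\<dots> = \<i> ^ card ({u} \<inter> nbrs6 u) * sg (nbrs6 u) (symd (symd Z {u}) {u}) * G (symd (symd Z {u}) {u})"
    by (rule apply_pauli[OF Q6_finite _ S]) (use u in simp)
  also have "\<dots> = sg (nbrs6 u) Z * G Z" using np by (simp add: symd_symd_cancel)
  finally show ?thesis .
qed

lemma G_const:
  assumes st: "\<forall>u\<in>Q6. apply_op Q6 (pauli Q6 {u} (nbrs6 u)) G = G"
    and Z: "Z \<subseteq> Q6"
  shows "cmod (G Z) = cmod (G {})"
proof -
  have fZ: "finite Z" using Z Q6_finite finite_subset by blast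
  from fZ Z show ?thesis
  proof (induction Z rule: finite_subset_induct')
    case empty then show ?case by simp
  next
    case (insert u Z)
    have Zs: "Z \<subseteq> Q6" using insert.hyps(3) .
    have "insert u Z = symd Z {u}" using insert.hyps(4) by (auto simp: symd_def)
    then have "G (insert u Z) = sg (nbrs6 u) Z * G Z" using G_flip[OF st insert.hyps(2) Zs] by simp
    then have "cmod (G (insert u Z)) = cmod (G Z)" by (simp add: sg_def norm_mult norm_power)
    then show ?case using insert.IH by simp
  qed
qed

lemma G_nz:
  assumes vn: "vnorm Q6 G = 1" and st: "\<forall>u\<in>Q6. apply_op Q6 (pauli Q6 {u} (nbrs6 u)) G = G"
  shows "G {} \<noteq> 0"
proof
  assume h: "G {} = 0"
  have "(\<Sum>S\<in>Pow Q6. (cmod (G S))^2) = 0"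
    by (rule sum.neutral) (use G_const[OF st] h in auto)
  then show False using vn by (simp add: vnorm_def)
qed

lemma graph_mm:
  assumes vn: "vnorm Q6 G = 1" and st: "\<forall>u\<in>Q6. apply_op Q6 (pauli Q6 {u} (nbrs6 u)) G = G"
    and XQ: "X \<subseteq> Q6"
    and cut: "\<forall>D. D \<subseteq> X \<longrightarrow> D \<noteq> {} \<longrightarrow> (\<exists>r\<in>Q6 - X. odd (card (nbrs6 r \<inter> D)))"
  shows "mm Q6 X G"
proof -
  define Y where "Y = Q6 - X"
  define \<kappa> where "\<kappa> = of_nat (card (Pow Y)) * (G {} * cnj (G {}))"
  have fY: "finite Y" unfolding Y_def using Q6_finite by simp
  have g0: "G {} \<noteq> 0" by (rule G_nz[OF vn st])
  have k0: "\<kappa> \<noteq> 0" unfolding \<kappa>_def using g0 fY by (simp add: card_Pow)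
  have diag: "G Z * cnj (G Z) = G {} * cnj (G {})" if "Z \<subseteq> Q6" for Z
  proof -
    have "G Z * cnj (G Z) = complex_of_real ((cmod (G Z))^2)" by (rule complex_norm_square[symmetric])
    also have "\<dots> = complex_of_real ((cmod (G {}))^2)" using G_const[OF st that] by simp
    also have "\<dots> = G {} * cnj (G {})" by (rule complex_norm_square)
    finally show ?thesis .
  qed
  have "\<forall>S\<in>Pow X. \<forall>T\<in>Pow X. (\<Sum>R\<in>Pow Y. G (S \<union> R) * cnj (G (T \<union> R))) = (if S = T then \<kappa> else 0)"
  proof (intro ballI)
    fix S T assume S: "S \<in> Pow X" and T: "T \<in> Pow X"
    show "(\<Sum>R\<in>Pow Y. G (S \<union> R) * cnj (G (T \<union> R))) = (if S = T then \<kappa> else 0)"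
    proof (cases "S = T")
      case True
      have "(\<Sum>R\<in>Pow Y. G (S \<union> R) * cnj (G (S \<union> R))) = (\<Sum>R\<in>Pow Y. G {} * cnj (G {}))"
      proof (rule sum.cong[OF refl])
        fix R assume "R \<in> Pow Y"
        then have "S \<union> R \<subseteq> Q6" using S XQ unfolding Y_def by auto
        then show "G (S \<union> R) * cnj (G (S \<union> R)) = G {} * cnj (G {})" by (rule diag)
      qed
      then show ?thesis using True by (simp add: \<kappa>_def)
    next
      case False
      define D where "D = symd S T"
      have D1: "D \<subseteq> X" using S T unfolding D_def by (simp add: symd_sub)
      have D2: "D \<noteq> {}" using False unfolding D_def symd_def by blast
      note D = D1 D2
      obtain r where r: "r \<in> Y" "odd (card (nbrs6 r \<inter> D))" using cut D unfolding Y_def by blast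
      have rQ: "r \<in> Q6" and rX: "r \<notin> X" using r(1) unfolding Y_def by auto
      have fN: "finite (nbrs6 r)" using nbrs6_props[OF rQ] by simp
      define h where "h R = G (S \<union> R) * cnj (G (T \<union> R))" for R
      have sgD: "sg (nbrs6 r) S * sg (nbrs6 r) T = -1"
      proof -
        have "sg (nbrs6 r) D = -1" using r(2) by (simp add: sg_def)
        then show ?thesis unfolding D_def using sg_symd_right[OF fN] by simp
      qed
      have flip: "h (symd R {r}) = - h R" if R: "R \<in> Pow Y" for R
      proof -
        have RQ: "R \<subseteq> Q6" using R unfolding Y_def by auto
        have SQ: "S \<union> R \<subseteq> Q6" "T \<union> R \<subseteq> Q6" using S T XQ RQ by auto
        have e1: "S \<union> symd R {r} = symd (S \<union> R) {r}" using S rX by (auto simp: symd_def)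
        have e2: "T \<union> symd R {r} = symd (T \<union> R) {r}" using T rX by (auto simp: symd_def)
        have dS: "S \<inter> R = {}" "T \<inter> R = {}" using S T R unfolding Y_def by auto
        have "h (symd R {r}) = (sg (nbrs6 r) (S \<union> R) * G (S \<union> R)) * cnj (sg (nbrs6 r) (T \<union> R) * G (T \<union> R))"
          unfolding h_def e1 e2 G_flip[OF st rQ SQ(1)] G_flip[OF st rQ SQ(2)] ..
        also have "\<dots> = (sg (nbrs6 r) S * sg (nbrs6 r) T) * (sg (nbrs6 r) R * sg (nbrs6 r) R) * h R"
          unfolding h_def sg_union_disj[OF fN dS(1)] sg_union_disj[OF fN dS(2)]
          by (simp add: sg_cnj mult_ac)
        also have "\<dots> = - h R" using sgD sg_sq by simp
        finally show ?thesis .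
      qed
      have bij: "bij_betw (\<lambda>R. symd R {r}) (Pow Y) (Pow Y)"
        by (rule bij_betw_byWitness[where f'="\<lambda>R. symd R {r}"])
           (use r(1) in \<open>auto simp: symd_def\<close>)
      have "(\<Sum>R\<in>Pow Y. h R) = (\<Sum>R\<in>Pow Y. h (symd R {r}))"
        using sum.reindex_bij_betw[OF bij, of h] by simp
      also have "\<dots> = (\<Sum>R\<in>Pow Y. - h R)" by (rule sum.cong[OF refl]) (rule flip)
      also have "\<dots> = - (\<Sum>R\<in>Pow Y. h R)" by (simp add: sum_negf)
      finally have "(\<Sum>R\<in>Pow Y. h R) = 0" by simp
      then show ?thesis using False unfolding h_def by simp
    qed
  qed
  then show ?thesis unfolding mm_def Y_def using k0 by blast
qed

lemma cut_14: "\<forall>D. D \<subseteq> {1,4} \<longrightarrow> D \<noteq> {} \<longrightarrow> (\<exists>r\<in>Q6 - {1,4}. odd (card (nbrs6 r \<inter> D)))"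
proof (intro allI impI)
  fix D :: "nat set" assume "D \<subseteq> {1,4}" "D \<noteq> {}"
  then have "D \<in> Pow {1,4} - {{}}" by simp
  then have "D \<in> {{1},{4},{1,4}}" by (simp add: Pow_insert insert_commute)
  then show "\<exists>r\<in>Q6 - {1,4}. odd (card (nbrs6 r \<inter> D))"
    by (auto simp: Q6_def nbrs6_vals insert_Diff_if)
qed

lemma cut_36: "\<forall>D. D \<subseteq> {3,6} \<longrightarrow> D \<noteq> {} \<longrightarrow> (\<exists>r\<in>Q6 - {3,6}. odd (card (nbrs6 r \<inter> D)))"
proof (intro allI impI)
  fix D :: "nat set" assume "D \<subseteq> {3,6}" "D \<noteq> {}"
  then have "D \<in> Pow {3,6} - {{}}" by simp
  then have "D \<in> {{3},{6},{3,6}}" by (simp add: Pow_insert insert_commute)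
  then show "\<exists>r\<in>Q6 - {3,6}. odd (card (nbrs6 r \<inter> D))"
    by (auto simp: Q6_def nbrs6_vals insert_Diff_if)
qed

lemma cut_2: "\<forall>D. D \<subseteq> {2} \<longrightarrow> D \<noteq> {} \<longrightarrow> (\<exists>r\<in>Q6 - {2}. odd (card (nbrs6 r \<inter> D)))"
proof (intro allI impI)
  fix D :: "nat set" assume "D \<subseteq> {2}" "D \<noteq> {}"
  then have "D \<in> Pow {2} - {{}}" by simp
  then have "D \<in> {{2}}" by (simp add: Pow_insert insert_commute)
  then show "\<exists>r\<in>Q6 - {2}. odd (card (nbrs6 r \<inter> D))"
    by (auto simp: Q6_def nbrs6_vals insert_Diff_if)
qed

lemma cut_5: "\<forall>D. D \<subseteq> {5} \<longrightarrow> D \<noteq> {} \<longrightarrow> (\<exists>r\<in>Q6 - {5}. odd (card (nbrs6 r \<inter> D)))"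
proof (intro allI impI)
  fix D :: "nat set" assume "D \<subseteq> {5}" "D \<noteq> {}"
  then have "D \<in> Pow {5} - {{}}" by simp
  then have "D \<in> {{5}}" by (simp add: Pow_insert insert_commute)
  then show "\<exists>r\<in>Q6 - {5}. odd (card (nbrs6 r \<inter> D))"
    by (auto simp: Q6_def nbrs6_vals insert_Diff_if)
qed

lemma cut_25: "\<forall>D. D \<subseteq> {2,5} \<longrightarrow> D \<noteq> {} \<longrightarrow> (\<exists>r\<in>Q6 - {2,5}. odd (card (nbrs6 r \<inter> D)))"
proof (intro allI impI)
  fix D :: "nat set" assume "D \<subseteq> {2,5}" "D \<noteq> {}"
  then have "D \<in> Pow {2,5} - {{}}" by simp
  then have "D \<in> {{2},{5},{2,5}}" by (simp add: Pow_insert insert_commute)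
  then show "\<exists>r\<in>Q6 - {2,5}. odd (card (nbrs6 r \<inter> D))"
    by (auto simp: Q6_def nbrs6_vals insert_Diff_if)
qed

lemma cut_124: "\<forall>D. D \<subseteq> {1,2,4} \<longrightarrow> D \<noteq> {} \<longrightarrow> (\<exists>r\<in>Q6 - {1,2,4}. odd (card (nbrs6 r \<inter> D)))"
proof (intro allI impI)
  fix D :: "nat set" assume "D \<subseteq> {1,2,4}" "D \<noteq> {}"
  then have "D \<in> Pow {1,2,4} - {{}}" by simp
  then have "D \<in> {{1},{2},{4},{1,2},{1,4},{2,4},{1,2,4}}" by (simp add: Pow_insert insert_commute)
  then show "\<exists>r\<in>Q6 - {1,2,4}. odd (card (nbrs6 r \<inter> D))"
    by (auto simp: Q6_def nbrs6_vals insert_Diff_if)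
qed

lemma cut_145: "\<forall>D. D \<subseteq> {1,4,5} \<longrightarrow> D \<noteq> {} \<longrightarrow> (\<exists>r\<in>Q6 - {1,4,5}. odd (card (nbrs6 r \<inter> D)))"
proof (intro allI impI)
  fix D :: "nat set" assume "D \<subseteq> {1,4,5}" "D \<noteq> {}"
  then have "D \<in> Pow {1,4,5} - {{}}" by simp
  then have "D \<in> {{1},{4},{5},{1,4},{1,5},{4,5},{1,4,5}}" by (simp add: Pow_insert insert_commute)
  then show "\<exists>r\<in>Q6 - {1,4,5}. odd (card (nbrs6 r \<inter> D))"
    by (auto simp: Q6_def nbrs6_vals insert_Diff_if)
qed

lemma cut_236: "\<forall>D. D \<subseteq> {2,3,6} \<longrightarrow> D \<noteq> {} \<longrightarrow> (\<exists>r\<in>Q6 - {2,3,6}. odd (card (nbrs6 r \<inter> D)))"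
proof (intro allI impI)
  fix D :: "nat set" assume "D \<subseteq> {2,3,6}" "D \<noteq> {}"
  then have "D \<in> Pow {2,3,6} - {{}}" by simp
  then have "D \<in> {{2},{3},{6},{2,3},{2,6},{3,6},{2,3,6}}" by (simp add: Pow_insert insert_commute)
  then show "\<exists>r\<in>Q6 - {2,3,6}. odd (card (nbrs6 r \<inter> D))"
    by (auto simp: Q6_def nbrs6_vals insert_Diff_if)
qed

lemma cut_356: "\<forall>D. D \<subseteq> {3,5,6} \<longrightarrow> D \<noteq> {} \<longrightarrow> (\<exists>r\<in>Q6 - {3,5,6}. odd (card (nbrs6 r \<inter> D)))"
proof (intro allI impI)
  fix D :: "nat set" assume "D \<subseteq> {3,5,6}" "D \<noteq> {}"
  then have "D \<in> Pow {3,5,6} - {{}}" by simp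
  then have "D \<in> {{3},{5},{6},{3,5},{3,6},{5,6},{3,5,6}}" by (simp add: Pow_insert insert_commute)
  then show "\<exists>r\<in>Q6 - {3,5,6}. odd (card (nbrs6 r \<inter> D))"
    by (auto simp: Q6_def nbrs6_vals insert_Diff_if)
qed

lemma key:
  assumes vn: "vnorm Q6 G = 1" and st: "\<forall>u\<in>Q6. apply_op Q6 (pauli Q6 {u} (nbrs6 u)) G = G"
    and I: "I \<subseteq> {..<4}" and XI: "(\<Union>i\<in>I. P6 i) = X"
    and cut: "\<forall>D. D \<subseteq> X \<longrightarrow> D \<noteq> {} \<longrightarrow> (\<exists>r\<in>Q6 - X. odd (card (nbrs6 r \<inter> D)))"
    and uni: "\<forall>i<4. unitary_on (P6 i) (U i)"
    and d: "Q1 \<inter> Q2 = {}" and u: "Q1 \<union> Q2 = Q6"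
    and sv1: "stabilizer_state Q1 v1" and sv2: "stabilizer_state Q2 v2"
    and eq: "apply_op Q6 (local_op Q6 parties6 U) G = (\<lambda>S. c * tensor_state Q1 Q2 v1 v2 S)"
  shows "mm Q1 (X \<inter> Q1) v1 \<and> mm Q2 (X \<inter> Q2) v2 \<and>
         card (X \<inter> Q1) \<le> card (Q1 - X \<inter> Q1) \<and> card (X \<inter> Q2) \<le> card (Q2 - X \<inter> Q2)"
proof -
  have XQ: "X \<subseteq> Q6" using split_XY(3)[OF I] XI by simp
  have mG: "mm Q6 X G" by (rule graph_mm[OF vn st XQ cut])
  have mW: "mm Q6 X (apply_op Q6 (local_op Q6 parties6 U) G)"
    using mm_transfer[OF I uni] mG XI by simp
  have f: "finite Q1" "finite Q2" using stab_basic(1)[OF sv1] stab_basic(1)[OF sv2] by auto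
  have XQ': "X \<subseteq> Q1 \<union> Q2" "X \<subseteq> Q2 \<union> Q1" using XQ u by auto
  have mW1: "mm (Q1 \<union> Q2) X (\<lambda>S. c * tensor_state Q1 Q2 v1 v2 S)" using mW eq u by simp
  have m1: "mm Q1 (X \<inter> Q1) v1" by (rule mm_product[OF d f(1) f(2) XQ'(1) mW1])
  have d': "Q2 \<inter> Q1 = {}" using d by auto
  have mW2: "mm (Q2 \<union> Q1) X (\<lambda>S. c * tensor_state Q2 Q1 v2 v1 S)"
    using mW1 tensor_swap[of Q1 Q2 v1 v2] by (simp add: Un_commute)
  have m2: "mm Q2 (X \<inter> Q2) v2" by (rule mm_product[OF d' f(2) f(1) XQ'(2) mW2])
  have c1: "card (X \<inter> Q1) \<le> card (Q1 - X \<inter> Q1)" by (rule stab_card[OF sv1 _ m1]) auto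
  have c2: "card (X \<inter> Q2) \<le> card (Q2 - X \<inter> Q2)" by (rule stab_card[OF sv2 _ m2]) auto
  show ?thesis using m1 m2 c1 c2 by simp
qed

lemma ame_inst:
  assumes sv: "stabilizer_state Q v" and Q: "Q = {a,b,c,d}"
    and dist: "a \<noteq> b" "a \<noteq> c" "a \<noteq> d" "b \<noteq> c" "b \<noteq> d" "c \<noteq> d"
    and m1: "mm Q (X1 \<inter> Q) v" and m2: "mm Q (X2 \<inter> Q) v" and m3: "mm Q (X3 \<inter> Q) v"
    and e1: "X1 \<inter> Q = {c,d}" and e2: "X2 \<inter> Q = {a,c}" and e3: "X3 \<inter> Q = {a,d}"
  shows False
  using ame[OF sv Q dist] m1 m2 m3 e1 e2 e3 by simp

lemma ame_side:
  assumes sv: "stabilizer_state Q v"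
    and m1: "mm Q ({2,5} \<inter> Q) v" and m2: "mm Q ({1,2,4} \<inter> Q) v" and m3: "mm Q ({1,4,5} \<inter> Q) v"
    and Q: "Q = {2,4,5,6} \<or> Q = {2,3,4,5} \<or> Q = {1,2,5,6} \<or> Q = {1,2,3,5}"
  shows False
  using Q
proof (elim disjE)
  assume Q: "Q = {2,4,5,6}"
  show False by (rule ame_inst[OF sv _ _ _ _ _ _ _ m1 m2 m3, of 4 6 2 5]) (use Q in auto)
next
  assume Q: "Q = {2,3,4,5}"
  show False by (rule ame_inst[OF sv _ _ _ _ _ _ _ m1 m2 m3, of 4 3 2 5]) (use Q in auto)
next
  assume Q: "Q = {1,2,5,6}"
  show False by (rule ame_inst[OF sv _ _ _ _ _ _ _ m1 m2 m3, of 1 6 2 5]) (use Q in auto)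
next
  assume Q: "Q = {1,2,3,5}"
  show False by (rule ame_inst[OF sv _ _ _ _ _ _ _ m1 m2 m3, of 1 3 2 5]) (use Q in auto)
qed

lemma card_sum: "finite X \<Longrightarrow> card (X \<inter> A) = (\<Sum>x\<in>X. of_bool (x \<in> A))"
  by (simp add: sum.inter_restrict[symmetric] of_bool_def)

lemma conv:
  assumes "Q1 \<subseteq> Q6" "Q2 = Q6 - Q1" "X \<subseteq> Q6"
  shows "card (X \<inter> Q1) = (\<Sum>x\<in>X. of_bool (x \<in> Q1))"
    "card (Q1 - X \<inter> Q1) = (\<Sum>x\<in>Q6 - X. of_bool (x \<in> Q1))"
    "card (X \<inter> Q2) = (\<Sum>x\<in>X. of_bool (x \<in> Q2))"
    "card (Q2 - X \<inter> Q2) = (\<Sum>x\<in>Q6 - X. of_bool (x \<in> Q2))"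
proof -
  have f: "finite X" "finite (Q6 - X)" using assms(3) Q6_finite finite_subset by auto
  show "card (X \<inter> Q1) = (\<Sum>x\<in>X. of_bool (x \<in> Q1))" by (rule card_sum[OF f(1)])
  show "card (X \<inter> Q2) = (\<Sum>x\<in>X. of_bool (x \<in> Q2))" by (rule card_sum[OF f(1)])
  have "Q1 - X \<inter> Q1 = (Q6 - X) \<inter> Q1" using assms by auto
  then show "card (Q1 - X \<inter> Q1) = (\<Sum>x\<in>Q6 - X. of_bool (x \<in> Q1))" using card_sum[OF f(2)] by simp
  have "Q2 - X \<inter> Q2 = (Q6 - X) \<inter> Q2" using assms by auto
  then show "card (Q2 - X \<inter> Q2) = (\<Sum>x\<in>Q6 - X. of_bool (x \<in> Q2))" using card_sum[OF f(2)] by simp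
qed

lemma final6:
  fixes p1 p2 p3 p4 p5 p6 :: bool
  assumes
    "(of_bool (p1) + of_bool (p4)) \<le> (of_bool (p2) + of_bool (p3) + of_bool (p5) + of_bool (p6) :: nat)"
    "(of_bool (\<not> p1) + of_bool (\<not> p4)) \<le> (of_bool (\<not> p2) + of_bool (\<not> p3) + of_bool (\<not> p5) + of_bool (\<not> p6) :: nat)"
    "(of_bool (p3) + of_bool (p6)) \<le> (of_bool (p1) + of_bool (p2) + of_bool (p4) + of_bool (p5) :: nat)"
    "(of_bool (\<not> p3) + of_bool (\<not> p6)) \<le> (of_bool (\<not> p1) + of_bool (\<not> p2) + of_bool (\<not> p4) + of_bool (\<not> p5) :: nat)"
    "(of_bool (p2)) \<le> (of_bool (p1) + of_bool (p3) + of_bool (p4) + of_bool (p5) + of_bool (p6) :: nat)"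
    "(of_bool (\<not> p2)) \<le> (of_bool (\<not> p1) + of_bool (\<not> p3) + of_bool (\<not> p4) + of_bool (\<not> p5) + of_bool (\<not> p6) :: nat)"
    "(of_bool (p5)) \<le> (of_bool (p1) + of_bool (p2) + of_bool (p3) + of_bool (p4) + of_bool (p6) :: nat)"
    "(of_bool (\<not> p5)) \<le> (of_bool (\<not> p1) + of_bool (\<not> p2) + of_bool (\<not> p3) + of_bool (\<not> p4) + of_bool (\<not> p6) :: nat)"
    "(of_bool (p2) + of_bool (p5)) \<le> (of_bool (p1) + of_bool (p3) + of_bool (p4) + of_bool (p6) :: nat)"
    "(of_bool (\<not> p2) + of_bool (\<not> p5)) \<le> (of_bool (\<not> p1) + of_bool (\<not> p3) + of_bool (\<not> p4) + of_bool (\<not> p6) :: nat)"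
    "(of_bool (p1) + of_bool (p2) + of_bool (p4)) \<le> (of_bool (p3) + of_bool (p5) + of_bool (p6) :: nat)"
    "(of_bool (\<not> p1) + of_bool (\<not> p2) + of_bool (\<not> p4)) \<le> (of_bool (\<not> p3) + of_bool (\<not> p5) + of_bool (\<not> p6) :: nat)"
    "(of_bool (p1) + of_bool (p4) + of_bool (p5)) \<le> (of_bool (p2) + of_bool (p3) + of_bool (p6) :: nat)"
    "(of_bool (\<not> p1) + of_bool (\<not> p4) + of_bool (\<not> p5)) \<le> (of_bool (\<not> p2) + of_bool (\<not> p3) + of_bool (\<not> p6) :: nat)"
    "(of_bool (p2) + of_bool (p3) + of_bool (p6)) \<le> (of_bool (p1) + of_bool (p4) + of_bool (p5) :: nat)"
    "(of_bool (\<not> p2) + of_bool (\<not> p3) + of_bool (\<not> p6)) \<le> (of_bool (\<not> p1) + of_bool (\<not> p4) + of_bool (\<not> p5) :: nat)"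
    "(of_bool (p3) + of_bool (p5) + of_bool (p6)) \<le> (of_bool (p1) + of_bool (p2) + of_bool (p4) :: nat)"
    "(of_bool (\<not> p3) + of_bool (\<not> p5) + of_bool (\<not> p6)) \<le> (of_bool (\<not> p1) + of_bool (\<not> p2) + of_bool (\<not> p4) :: nat)"
    and "\<not> (\<not> p1 \<and> p2 \<and> \<not> p3 \<and> p4 \<and> p5 \<and> p6)"
    and "\<not> (\<not> p1 \<and> p2 \<and> p3 \<and> p4 \<and> p5 \<and> \<not> p6)"
    and "\<not> (p1 \<and> p2 \<and> \<not> p3 \<and> \<not> p4 \<and> p5 \<and> p6)"
    and "\<not> (p1 \<and> p2 \<and> p3 \<and> \<not> p4 \<and> p5 \<and> \<not> p6)"
    and "\<not> (p1 \<and> \<not> p2 \<and> p3 \<and> \<not> p4 \<and> \<not> p5 \<and> \<not> p6)"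
    and "\<not> (p1 \<and> \<not> p2 \<and> \<not> p3 \<and> \<not> p4 \<and> \<not> p5 \<and> p6)"
    and "\<not> (\<not> p1 \<and> \<not> p2 \<and> p3 \<and> p4 \<and> \<not> p5 \<and> \<not> p6)"
    and "\<not> (\<not> p1 \<and> \<not> p2 \<and> \<not> p3 \<and> p4 \<and> \<not> p5 \<and> p6)"
    and "p1 \<or> p2 \<or> p3 \<or> p4 \<or> p5 \<or> p6" and "\<not> p1 \<or> \<not> p2 \<or> \<not> p3 \<or> \<not> p4 \<or> \<not> p5 \<or> \<not> p6"
  shows False
  using assms by (cases p1; cases p2; cases p3; cases p4; cases p5; cases p6) simp_all


theorem mainTheorem14:
  fixes G :: state
  assumes "vec_on Q6 G" and "vnorm Q6 G = 1"
    and "\<forall>u\<in>Q6. apply_op Q6 (pauli Q6 {u} (nbrs6 u)) G = G"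
  shows "\<not> (\<exists>Q1 Q2 (\<psi>1::state) (\<psi>2::state) (U :: nat \<Rightarrow> op) (c::complex).
            Q1 \<inter> Q2 = {} \<and> Q1 \<union> Q2 = Q6 \<and> Q1 \<noteq> {} \<and> Q2 \<noteq> {} \<and>
            stabilizer_state Q1 \<psi>1 \<and> stabilizer_state Q2 \<psi>2 \<and>
            (\<forall>i<length parties6. clifford (parties6 ! i) (U i)) \<and>
            cmod c = 1 \<and>
            apply_op Q6 (local_op Q6 parties6 U) G = (\<lambda>S. c * tensor_state Q1 Q2 \<psi>1 \<psi>2 S))"
proof
  assume "\<exists>Q1 Q2 (\<psi>1::state) (\<psi>2::state) (U :: nat \<Rightarrow> op) (c::complex).
            Q1 \<inter> Q2 = {} \<and> Q1 \<union> Q2 = Q6 \<and> Q1 \<noteq> {} \<and> Q2 \<noteq> {} \<and>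
            stabilizer_state Q1 \<psi>1 \<and> stabilizer_state Q2 \<psi>2 \<and>
            (\<forall>i<length parties6. clifford (parties6 ! i) (U i)) \<and>
            cmod c = 1 \<and>
            apply_op Q6 (local_op Q6 parties6 U) G = (\<lambda>S. c * tensor_state Q1 Q2 \<psi>1 \<psi>2 S)"
  then obtain Q1 Q2 \<psi>1 \<psi>2 U c where
    d: "Q1 \<inter> Q2 = {}" and u: "Q1 \<union> Q2 = Q6" and n1: "Q1 \<noteq> {}" and n2: "Q2 \<noteq> {}" and
    sv1: "stabilizer_state Q1 \<psi>1" and sv2: "stabilizer_state Q2 \<psi>2" and
    cl: "\<forall>i<length parties6. clifford (parties6 ! i) (U i)" and
    eq: "apply_op Q6 (local_op Q6 parties6 U) G = (\<lambda>S. c * tensor_state Q1 Q2 \<psi>1 \<psi>2 S)"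
    by blast
  have vn: "vnorm Q6 G = 1" and st: "\<forall>u\<in>Q6. apply_op Q6 (pauli Q6 {u} (nbrs6 u)) G = G"
    using assms by auto
  have uni: "\<forall>i<4. unitary_on (P6 i) (U i)"
    using cl by (simp add: len_parties6 P6_def clifford_def)
  have Q1s: "Q1 \<subseteq> Q6" using u by auto
  have Q2e: "Q2 = Q6 - Q1" using d u by auto
  have K14: "mm Q1 ({1,4} \<inter> Q1) \<psi>1 \<and> mm Q2 ({1,4} \<inter> Q2) \<psi>2 \<and>
         card ({1,4} \<inter> Q1) \<le> card (Q1 - {1,4} \<inter> Q1) \<and> card ({1,4} \<inter> Q2) \<le> card (Q2 - {1,4} \<inter> Q2)"
    by (rule key[OF vn st _ _ cut_14 uni d u sv1 sv2 eq, of "{0}"]) (auto simp: P6_vals)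
  have C14: "card ({1,4} \<inter> Q1) \<le> card (Q1 - {1,4} \<inter> Q1)" "card ({1,4} \<inter> Q2) \<le> card (Q2 - {1,4} \<inter> Q2)"
    using K14 by auto
  have X14: "{1,4} \<subseteq> Q6" by (simp add: Q6_def)
  note D14 = C14[unfolded conv[OF Q1s Q2e X14]]
  have K36: "mm Q1 ({3,6} \<inter> Q1) \<psi>1 \<and> mm Q2 ({3,6} \<inter> Q2) \<psi>2 \<and>
         card ({3,6} \<inter> Q1) \<le> card (Q1 - {3,6} \<inter> Q1) \<and> card ({3,6} \<inter> Q2) \<le> card (Q2 - {3,6} \<inter> Q2)"
    by (rule key[OF vn st _ _ cut_36 uni d u sv1 sv2 eq, of "{1}"]) (auto simp: P6_vals)
  have C36: "card ({3,6} \<inter> Q1) \<le> card (Q1 - {3,6} \<inter> Q1)" "card ({3,6} \<inter> Q2) \<le> card (Q2 - {3,6} \<inter> Q2)"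
    using K36 by auto
  have X36: "{3,6} \<subseteq> Q6" by (simp add: Q6_def)
  note D36 = C36[unfolded conv[OF Q1s Q2e X36]]
  have K2: "mm Q1 ({2} \<inter> Q1) \<psi>1 \<and> mm Q2 ({2} \<inter> Q2) \<psi>2 \<and>
         card ({2} \<inter> Q1) \<le> card (Q1 - {2} \<inter> Q1) \<and> card ({2} \<inter> Q2) \<le> card (Q2 - {2} \<inter> Q2)"
    by (rule key[OF vn st _ _ cut_2 uni d u sv1 sv2 eq, of "{2}"]) (auto simp: P6_vals)
  have C2: "card ({2} \<inter> Q1) \<le> card (Q1 - {2} \<inter> Q1)" "card ({2} \<inter> Q2) \<le> card (Q2 - {2} \<inter> Q2)"
    using K2 by auto
  have X2: "{2} \<subseteq> Q6" by (simp add: Q6_def)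
  note D2 = C2[unfolded conv[OF Q1s Q2e X2]]
  have K5: "mm Q1 ({5} \<inter> Q1) \<psi>1 \<and> mm Q2 ({5} \<inter> Q2) \<psi>2 \<and>
         card ({5} \<inter> Q1) \<le> card (Q1 - {5} \<inter> Q1) \<and> card ({5} \<inter> Q2) \<le> card (Q2 - {5} \<inter> Q2)"
    by (rule key[OF vn st _ _ cut_5 uni d u sv1 sv2 eq, of "{3}"]) (auto simp: P6_vals)
  have C5: "card ({5} \<inter> Q1) \<le> card (Q1 - {5} \<inter> Q1)" "card ({5} \<inter> Q2) \<le> card (Q2 - {5} \<inter> Q2)"
    using K5 by auto
  have X5: "{5} \<subseteq> Q6" by (simp add: Q6_def)
  note D5 = C5[unfolded conv[OF Q1s Q2e X5]]
  have K25: "mm Q1 ({2,5} \<inter> Q1) \<psi>1 \<and> mm Q2 ({2,5} \<inter> Q2) \<psi>2 \<and>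
         card ({2,5} \<inter> Q1) \<le> card (Q1 - {2,5} \<inter> Q1) \<and> card ({2,5} \<inter> Q2) \<le> card (Q2 - {2,5} \<inter> Q2)"
    by (rule key[OF vn st _ _ cut_25 uni d u sv1 sv2 eq, of "{2,3}"]) (auto simp: P6_vals)
  have C25: "card ({2,5} \<inter> Q1) \<le> card (Q1 - {2,5} \<inter> Q1)" "card ({2,5} \<inter> Q2) \<le> card (Q2 - {2,5} \<inter> Q2)"
    using K25 by auto
  have X25: "{2,5} \<subseteq> Q6" by (simp add: Q6_def)
  note D25 = C25[unfolded conv[OF Q1s Q2e X25]]
  have K124: "mm Q1 ({1,2,4} \<inter> Q1) \<psi>1 \<and> mm Q2 ({1,2,4} \<inter> Q2) \<psi>2 \<and>
         card ({1,2,4} \<inter> Q1) \<le> card (Q1 - {1,2,4} \<inter> Q1) \<and> card ({1,2,4} \<inter> Q2) \<le> card (Q2 - {1,2,4} \<inter> Q2)"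
    by (rule key[OF vn st _ _ cut_124 uni d u sv1 sv2 eq, of "{0,2}"]) (auto simp: P6_vals)
  have C124: "card ({1,2,4} \<inter> Q1) \<le> card (Q1 - {1,2,4} \<inter> Q1)" "card ({1,2,4} \<inter> Q2) \<le> card (Q2 - {1,2,4} \<inter> Q2)"
    using K124 by auto
  have X124: "{1,2,4} \<subseteq> Q6" by (simp add: Q6_def)
  note D124 = C124[unfolded conv[OF Q1s Q2e X124]]
  have K145: "mm Q1 ({1,4,5} \<inter> Q1) \<psi>1 \<and> mm Q2 ({1,4,5} \<inter> Q2) \<psi>2 \<and>
         card ({1,4,5} \<inter> Q1) \<le> card (Q1 - {1,4,5} \<inter> Q1) \<and> card ({1,4,5} \<inter> Q2) \<le> card (Q2 - {1,4,5} \<inter> Q2)"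
    by (rule key[OF vn st _ _ cut_145 uni d u sv1 sv2 eq, of "{0,3}"]) (auto simp: P6_vals)
  have C145: "card ({1,4,5} \<inter> Q1) \<le> card (Q1 - {1,4,5} \<inter> Q1)" "card ({1,4,5} \<inter> Q2) \<le> card (Q2 - {1,4,5} \<inter> Q2)"
    using K145 by auto
  have X145: "{1,4,5} \<subseteq> Q6" by (simp add: Q6_def)
  note D145 = C145[unfolded conv[OF Q1s Q2e X145]]
  have K236: "mm Q1 ({2,3,6} \<inter> Q1) \<psi>1 \<and> mm Q2 ({2,3,6} \<inter> Q2) \<psi>2 \<and>
         card ({2,3,6} \<inter> Q1) \<le> card (Q1 - {2,3,6} \<inter> Q1) \<and> card ({2,3,6} \<inter> Q2) \<le> card (Q2 - {2,3,6} \<inter> Q2)"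
    by (rule key[OF vn st _ _ cut_236 uni d u sv1 sv2 eq, of "{1,2}"]) (auto simp: P6_vals)
  have C236: "card ({2,3,6} \<inter> Q1) \<le> card (Q1 - {2,3,6} \<inter> Q1)" "card ({2,3,6} \<inter> Q2) \<le> card (Q2 - {2,3,6} \<inter> Q2)"
    using K236 by auto
  have X236: "{2,3,6} \<subseteq> Q6" by (simp add: Q6_def)
  note D236 = C236[unfolded conv[OF Q1s Q2e X236]]
  have K356: "mm Q1 ({3,5,6} \<inter> Q1) \<psi>1 \<and> mm Q2 ({3,5,6} \<inter> Q2) \<psi>2 \<and>
         card ({3,5,6} \<inter> Q1) \<le> card (Q1 - {3,5,6} \<inter> Q1) \<and> card ({3,5,6} \<inter> Q2) \<le> card (Q2 - {3,5,6} \<inter> Q2)"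
    by (rule key[OF vn st _ _ cut_356 uni d u sv1 sv2 eq, of "{1,3}"]) (auto simp: P6_vals)
  have C356: "card ({3,5,6} \<inter> Q1) \<le> card (Q1 - {3,5,6} \<inter> Q1)" "card ({3,5,6} \<inter> Q2) \<le> card (Q2 - {3,5,6} \<inter> Q2)"
    using K356 by auto
  have X356: "{3,5,6} \<subseteq> Q6" by (simp add: Q6_def)
  note D356 = C356[unfolded conv[OF Q1s Q2e X356]]
  have A1: False if "Q1 = {2,4,5,6} \<or> Q1 = {2,3,4,5} \<or> Q1 = {1,2,5,6} \<or> Q1 = {1,2,3,5}"
    by (rule ame_side[OF sv1 _ _ _ that]) (use K25 K124 K145 in auto)
  have A2: False if "Q2 = {2,4,5,6} \<or> Q2 = {2,3,4,5} \<or> Q2 = {1,2,5,6} \<or> Q2 = {1,2,3,5}"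
    by (rule ame_side[OF sv2 _ _ _ that]) (use K25 K124 K145 in auto)
  have mem2: "x \<in> Q2 \<longleftrightarrow> x \<in> Q6 \<and> x \<notin> Q1" for x using Q2e by auto
  have mem1: "x \<in> Q1 \<longrightarrow> x \<in> Q6" for x using Q1s by auto
  have ne1: "1 \<in> Q1 \<or> 2 \<in> Q1 \<or> 3 \<in> Q1 \<or> 4 \<in> Q1 \<or> 5 \<in> Q1 \<or> 6 \<in> Q1"
    using n1 Q1s by (auto simp: Q6_def)
  have ne2: "1 \<notin> Q1 \<or> 2 \<notin> Q1 \<or> 3 \<notin> Q1 \<or> 4 \<notin> Q1 \<or> 5 \<notin> Q1 \<or> 6 \<notin> Q1"
    using n2 Q2e by (auto simp: Q6_def)
  have setQ1: "Q1 = S" if h: "\<forall>x\<in>Q6. x \<in> Q1 \<longleftrightarrow> x \<in> S" and hS: "S \<subseteq> Q6" for S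
  proof (rule set_eqI)
    fix x show "x \<in> Q1 \<longleftrightarrow> x \<in> S" using h hS Q1s by (cases "x \<in> Q6") auto
  qed
  have setQ2: "Q2 = S" if h: "\<forall>x\<in>Q6. x \<notin> Q1 \<longleftrightarrow> x \<in> S" and hS: "S \<subseteq> Q6" for S
  proof (rule set_eqI)
    fix x show "x \<in> Q2 \<longleftrightarrow> x \<in> S" using h hS mem2 by (cases "x \<in> Q6") auto
  qed
  have NA1: "\<not> (1 \<notin> Q1 \<and> 2 \<in> Q1 \<and> 3 \<notin> Q1 \<and> 4 \<in> Q1 \<and> 5 \<in> Q1 \<and> 6 \<in> Q1)"
  proof
    assume h: "1 \<notin> Q1 \<and> 2 \<in> Q1 \<and> 3 \<notin> Q1 \<and> 4 \<in> Q1 \<and> 5 \<in> Q1 \<and> 6 \<in> Q1"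
    have "Q1 = {2,4,5,6}" by (rule setQ1) (use h in \<open>auto simp: Q6_def\<close>)
    then show False using A1 by blast
  qed
  have NA2: "\<not> (1 \<notin> Q1 \<and> 2 \<in> Q1 \<and> 3 \<in> Q1 \<and> 4 \<in> Q1 \<and> 5 \<in> Q1 \<and> 6 \<notin> Q1)"
  proof
    assume h: "1 \<notin> Q1 \<and> 2 \<in> Q1 \<and> 3 \<in> Q1 \<and> 4 \<in> Q1 \<and> 5 \<in> Q1 \<and> 6 \<notin> Q1"
    have "Q1 = {2,3,4,5}" by (rule setQ1) (use h in \<open>auto simp: Q6_def\<close>)
    then show False using A1 by blast
  qed
  have NA3: "\<not> (1 \<in> Q1 \<and> 2 \<in> Q1 \<and> 3 \<notin> Q1 \<and> 4 \<notin> Q1 \<and> 5 \<in> Q1 \<and> 6 \<in> Q1)"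
  proof
    assume h: "1 \<in> Q1 \<and> 2 \<in> Q1 \<and> 3 \<notin> Q1 \<and> 4 \<notin> Q1 \<and> 5 \<in> Q1 \<and> 6 \<in> Q1"
    have "Q1 = {1,2,5,6}" by (rule setQ1) (use h in \<open>auto simp: Q6_def\<close>)
    then show False using A1 by blast
  qed
  have NA4: "\<not> (1 \<in> Q1 \<and> 2 \<in> Q1 \<and> 3 \<in> Q1 \<and> 4 \<notin> Q1 \<and> 5 \<in> Q1 \<and> 6 \<notin> Q1)"
  proof
    assume h: "1 \<in> Q1 \<and> 2 \<in> Q1 \<and> 3 \<in> Q1 \<and> 4 \<notin> Q1 \<and> 5 \<in> Q1 \<and> 6 \<notin> Q1"
    have "Q1 = {1,2,3,5}" by (rule setQ1) (use h in \<open>auto simp: Q6_def\<close>)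
    then show False using A1 by blast
  qed
  have NB1: "\<not> (1 \<in> Q1 \<and> 2 \<notin> Q1 \<and> 3 \<in> Q1 \<and> 4 \<notin> Q1 \<and> 5 \<notin> Q1 \<and> 6 \<notin> Q1)"
  proof
    assume h: "1 \<in> Q1 \<and> 2 \<notin> Q1 \<and> 3 \<in> Q1 \<and> 4 \<notin> Q1 \<and> 5 \<notin> Q1 \<and> 6 \<notin> Q1"
    have "Q2 = {2,4,5,6}" by (rule setQ2) (use h in \<open>auto simp: Q6_def\<close>)
    then show False using A2 by blast
  qed
  have NB2: "\<not> (1 \<in> Q1 \<and> 2 \<notin> Q1 \<and> 3 \<notin> Q1 \<and> 4 \<notin> Q1 \<and> 5 \<notin> Q1 \<and> 6 \<in> Q1)"
  proof
    assume h: "1 \<in> Q1 \<and> 2 \<notin> Q1 \<and> 3 \<notin> Q1 \<and> 4 \<notin> Q1 \<and> 5 \<notin> Q1 \<and> 6 \<in> Q1"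
    have "Q2 = {2,3,4,5}" by (rule setQ2) (use h in \<open>auto simp: Q6_def\<close>)
    then show False using A2 by blast
  qed
  have NB3: "\<not> (1 \<notin> Q1 \<and> 2 \<notin> Q1 \<and> 3 \<in> Q1 \<and> 4 \<in> Q1 \<and> 5 \<notin> Q1 \<and> 6 \<notin> Q1)"
  proof
    assume h: "1 \<notin> Q1 \<and> 2 \<notin> Q1 \<and> 3 \<in> Q1 \<and> 4 \<in> Q1 \<and> 5 \<notin> Q1 \<and> 6 \<notin> Q1"
    have "Q2 = {1,2,5,6}" by (rule setQ2) (use h in \<open>auto simp: Q6_def\<close>)
    then show False using A2 by blast
  qed
  have NB4: "\<not> (1 \<notin> Q1 \<and> 2 \<notin> Q1 \<and> 3 \<notin> Q1 \<and> 4 \<in> Q1 \<and> 5 \<notin> Q1 \<and> 6 \<in> Q1)"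
  proof
    assume h: "1 \<notin> Q1 \<and> 2 \<notin> Q1 \<and> 3 \<notin> Q1 \<and> 4 \<in> Q1 \<and> 5 \<notin> Q1 \<and> 6 \<in> Q1"
    have "Q2 = {1,2,3,5}" by (rule setQ2) (use h in \<open>auto simp: Q6_def\<close>)
    then show False using A2 by blast
  qed
  note cs = D14 D36 D2 D5 D25 D124 D145 D236 D356
  have E14_1: "(of_bool (1 \<in> Q1) + of_bool (4 \<in> Q1)) \<le> (of_bool (2 \<in> Q1) + of_bool (3 \<in> Q1) + of_bool (5 \<in> Q1) + of_bool (6 \<in> Q1) :: nat)"
    using D14(1) by (simp add: Q6_def insert_Diff_if mem2 del: sum_of_bool_eq)
  have E14_2: "(of_bool (\<not> 1 \<in> Q1) + of_bool (\<not> 4 \<in> Q1)) \<le> (of_bool (\<not> 2 \<in> Q1) + of_bool (\<not> 3 \<in> Q1) + of_bool (\<not> 5 \<in> Q1) + of_bool (\<not> 6 \<in> Q1) :: nat)"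
    using D14(2) by (simp add: Q6_def insert_Diff_if mem2 del: sum_of_bool_eq)
  have E36_1: "(of_bool (3 \<in> Q1) + of_bool (6 \<in> Q1)) \<le> (of_bool (1 \<in> Q1) + of_bool (2 \<in> Q1) + of_bool (4 \<in> Q1) + of_bool (5 \<in> Q1) :: nat)"
    using D36(1) by (simp add: Q6_def insert_Diff_if mem2 del: sum_of_bool_eq)
  have E36_2: "(of_bool (\<not> 3 \<in> Q1) + of_bool (\<not> 6 \<in> Q1)) \<le> (of_bool (\<not> 1 \<in> Q1) + of_bool (\<not> 2 \<in> Q1) + of_bool (\<not> 4 \<in> Q1) + of_bool (\<not> 5 \<in> Q1) :: nat)"
    using D36(2) by (simp add: Q6_def insert_Diff_if mem2 del: sum_of_bool_eq)
  have E2_1: "(of_bool (2 \<in> Q1)) \<le> (of_bool (1 \<in> Q1) + of_bool (3 \<in> Q1) + of_bool (4 \<in> Q1) + of_bool (5 \<in> Q1) + of_bool (6 \<in> Q1) :: nat)"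
    using D2(1) by (simp add: Q6_def insert_Diff_if mem2 del: sum_of_bool_eq)
  have E2_2: "(of_bool (\<not> 2 \<in> Q1)) \<le> (of_bool (\<not> 1 \<in> Q1) + of_bool (\<not> 3 \<in> Q1) + of_bool (\<not> 4 \<in> Q1) + of_bool (\<not> 5 \<in> Q1) + of_bool (\<not> 6 \<in> Q1) :: nat)"
    using D2(2) by (simp add: Q6_def insert_Diff_if mem2 del: sum_of_bool_eq)
  have E5_1: "(of_bool (5 \<in> Q1)) \<le> (of_bool (1 \<in> Q1) + of_bool (2 \<in> Q1) + of_bool (3 \<in> Q1) + of_bool (4 \<in> Q1) + of_bool (6 \<in> Q1) :: nat)"
    using D5(1) by (simp add: Q6_def insert_Diff_if mem2 del: sum_of_bool_eq)
  have E5_2: "(of_bool (\<not> 5 \<in> Q1)) \<le> (of_bool (\<not> 1 \<in> Q1) + of_bool (\<not> 2 \<in> Q1) + of_bool (\<not> 3 \<in> Q1) + of_bool (\<not> 4 \<in> Q1) + of_bool (\<not> 6 \<in> Q1) :: nat)"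
    using D5(2) by (simp add: Q6_def insert_Diff_if mem2 del: sum_of_bool_eq)
  have E25_1: "(of_bool (2 \<in> Q1) + of_bool (5 \<in> Q1)) \<le> (of_bool (1 \<in> Q1) + of_bool (3 \<in> Q1) + of_bool (4 \<in> Q1) + of_bool (6 \<in> Q1) :: nat)"
    using D25(1) by (simp add: Q6_def insert_Diff_if mem2 del: sum_of_bool_eq)
  have E25_2: "(of_bool (\<not> 2 \<in> Q1) + of_bool (\<not> 5 \<in> Q1)) \<le> (of_bool (\<not> 1 \<in> Q1) + of_bool (\<not> 3 \<in> Q1) + of_bool (\<not> 4 \<in> Q1) + of_bool (\<not> 6 \<in> Q1) :: nat)"
    using D25(2) by (simp add: Q6_def insert_Diff_if mem2 del: sum_of_bool_eq)
  have E124_1: "(of_bool (1 \<in> Q1) + of_bool (2 \<in> Q1) + of_bool (4 \<in> Q1)) \<le> (of_bool (3 \<in> Q1) + of_bool (5 \<in> Q1) + of_bool (6 \<in> Q1) :: nat)"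
    using D124(1) by (simp add: Q6_def insert_Diff_if mem2 del: sum_of_bool_eq)
  have E124_2: "(of_bool (\<not> 1 \<in> Q1) + of_bool (\<not> 2 \<in> Q1) + of_bool (\<not> 4 \<in> Q1)) \<le> (of_bool (\<not> 3 \<in> Q1) + of_bool (\<not> 5 \<in> Q1) + of_bool (\<not> 6 \<in> Q1) :: nat)"
    using D124(2) by (simp add: Q6_def insert_Diff_if mem2 del: sum_of_bool_eq)
  have E145_1: "(of_bool (1 \<in> Q1) + of_bool (4 \<in> Q1) + of_bool (5 \<in> Q1)) \<le> (of_bool (2 \<in> Q1) + of_bool (3 \<in> Q1) + of_bool (6 \<in> Q1) :: nat)"
    using D145(1) by (simp add: Q6_def insert_Diff_if mem2 del: sum_of_bool_eq)
  have E145_2: "(of_bool (\<not> 1 \<in> Q1) + of_bool (\<not> 4 \<in> Q1) + of_bool (\<not> 5 \<in> Q1)) \<le> (of_bool (\<not> 2 \<in> Q1) + of_bool (\<not> 3 \<in> Q1) + of_bool (\<not> 6 \<in> Q1) :: nat)"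
    using D145(2) by (simp add: Q6_def insert_Diff_if mem2 del: sum_of_bool_eq)
  have E236_1: "(of_bool (2 \<in> Q1) + of_bool (3 \<in> Q1) + of_bool (6 \<in> Q1)) \<le> (of_bool (1 \<in> Q1) + of_bool (4 \<in> Q1) + of_bool (5 \<in> Q1) :: nat)"
    using D236(1) by (simp add: Q6_def insert_Diff_if mem2 del: sum_of_bool_eq)
  have E236_2: "(of_bool (\<not> 2 \<in> Q1) + of_bool (\<not> 3 \<in> Q1) + of_bool (\<not> 6 \<in> Q1)) \<le> (of_bool (\<not> 1 \<in> Q1) + of_bool (\<not> 4 \<in> Q1) + of_bool (\<not> 5 \<in> Q1) :: nat)"
    using D236(2) by (simp add: Q6_def insert_Diff_if mem2 del: sum_of_bool_eq)
  have E356_1: "(of_bool (3 \<in> Q1) + of_bool (5 \<in> Q1) + of_bool (6 \<in> Q1)) \<le> (of_bool (1 \<in> Q1) + of_bool (2 \<in> Q1) + of_bool (4 \<in> Q1) :: nat)"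
    using D356(1) by (simp add: Q6_def insert_Diff_if mem2 del: sum_of_bool_eq)
  have E356_2: "(of_bool (\<not> 3 \<in> Q1) + of_bool (\<not> 5 \<in> Q1) + of_bool (\<not> 6 \<in> Q1)) \<le> (of_bool (\<not> 1 \<in> Q1) + of_bool (\<not> 2 \<in> Q1) + of_bool (\<not> 4 \<in> Q1) :: nat)"
    using D356(2) by (simp add: Q6_def insert_Diff_if mem2 del: sum_of_bool_eq)
  show False
    by (rule final6[OF E14_1 E14_2 E36_1 E36_2 E2_1 E2_2 E5_1 E5_2 E25_1 E25_2 E124_1 E124_2 E145_1 E145_2 E236_1 E236_2 E356_1 E356_2 NA1 NA2 NA3 NA4 NB1 NB2 NB3 NB4 ne1 ne2])
qed

end
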